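(* Let $\bm{P}$ be a probability measure on $\mathbb{X}^\infty$ of the form $\bm{P}(x)=\int\bm{P}_{\bm{\theta}}(x)\,d\bm{\pi}(\bm{\theta})$, and suppose $\bm{P}$ is computable and $c:\mathbb{N}\to\mathbb{Y}^+$ is a computable prefix code for natural numbers. Then the Bayesian code $C$ with respect to $(\{\bm{P}_{\bm{\theta}}\},\bm{\pi},c)$ is $(\mathcal{B}_{\bm{P}},|c(n)|+1)$-superuniversal; that is, $C$ is a computable prefix code and for every $\bm{x}\in\mathcal{B}_{\bm{P}}$, $|C(x^n)|-K(x^n)<|c(n)|+1$ holds for all but finitely many $n\in\mathbb{N}$.
   Context: $\mathbb{X}$ is a countable alphabet, $\mathbb{Y}=\{0,1,\ldots,D-1\}$, $\log$ is logarithm to base $D$, $x^n$ is the length-$n$ prefix of $\bm{x}\in\mathbb{X}^\infty$, and $K$ is prefix Kolmogorov complexity for a fixed universal prefix machine. A code $C$ is computable if both $C$ and $C^{-1}$ are computable. $\{\bm{P}_{\bm{\theta}}:\bm{\theta}\in\bm{\Theta}\}$ is a measurably parameterized family of probability measures on $\mathbb{X}^\infty$ and $\bm{\pi}$ a prior probability measure on $\bm{\Theta}$. The Bayesian code is $C(x)=c(|x|)\bm{C}(x)$ where $\bm{C}(x)$ is the Shannon–Fano codeword for $x$ with respect to $\bm{P}$, a codeword of length $\lceil-\log\bm{P}(x)\rceil$ from a prefix code among strings of each fixed length, so $|C(x)|=|c(|x|)|+\lceil-\log\bm{P}(x)\rceil$. $\bm{P}$ is computable if $(x,m)\mapsto\lfloor\bm{P}(x)D^m\rfloor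 D^{-m}$ is computable. $\mathcal{B}_{\bm{P}}$ (the $\bm{P}$-Barron random sequences) is the set of $\bm{x}\in\mathbb{X}^\infty$ such that $K(x^n)+\log\bm{P}(x^n)>0$ for all but finitely many $n$. *)

theory Defs
  imports "HOL-Probability.Probability" "HOL-Library.Nat_Bijection" "HOL-Library.Sublist"
begin

fun prec :: "(nat list \<Rightarrow> nat option) \<Rightarrow> (nat list \<Rightarrow> nat option) \<Rightarrow> nat \<Rightarrow> nat list \<Rightarrow> nat option" where
  "prec f g 0 xs = f xs"
| "prec f g (Suc y) xs = (case prec f g y xs of None \<Rightarrow> None | Some r \<Rightarrow> g (y # r # xs))"

definition mu :: "(nat list \<Rightarrow> nat option) \<Rightarrow> nat list \<Rightarrow> nat option" where
  "mu f xs = (if \<exists>y. f (y # xs) = Some 0 \<and> (\<forall>z<y. f (z # xs) \<noteq> None)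
              then Some (LEAST y. f (y # xs) = Some 0 \<and> (\<forall>z<y. f (z # xs) \<noteq> None))
              else None)"

text \<open>partrec n f: f is a partial recursive function of arity n (its values on
  argument lists of length different from n are irrelevant).\<close>
inductive partrec :: "nat \<Rightarrow> (nat list \<Rightarrow> nat option) \<Rightarrow> bool" where
  zero: "partrec n (\<lambda>_. Some 0)"
| succ: "partrec 1 (\<lambda>xs. Some (Suc (hd xs)))"
| proj: "i < n \<Longrightarrow> partrec n (\<lambda>xs. Some (xs ! i))"
| comp: "partrec m g \<Longrightarrow> (\<And>i. i < m \<Longrightarrow> partrec n (fs i)) \<Longrightarrow>
         partrec n (\<lambda>xs. if (\<forall>i<m. fs i xs \<noteq> None)
                          then g (map (\<lambda>i. the (fs i xs)) [0..<m]) else None)"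
| prim: "partrec n f \<Longrightarrow> partrec (Suc (Suc n)) g \<Longrightarrow>
         partrec (Suc n) (\<lambda>xs. prec f g (hd xs) (tl xs))"
| minim: "partrec (Suc n) f \<Longrightarrow> partrec n (mu f)"
| ext: "partrec n f \<Longrightarrow> (\<And>xs. length xs = n \<Longrightarrow> g xs = f xs) \<Longrightarrow> partrec n g"

definition computable1 :: "(nat \<Rightarrow> nat option) \<Rightarrow> bool" where
  "computable1 f \<longleftrightarrow> partrec 1 (\<lambda>xs. f (hd xs))"

text \<open>The countable alphabet is identified with an initial segment of nat
  (all of nat if it is infinite) via the fixed enumeration to_nat.\<close>
definition sym_code :: "'a::countable \<Rightarrow> nat" where
  "sym_code a = card {b::'a. to_nat b < to_nat a}"

definition str_code :: "'a::countable list \<Rightarrow> nat" where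
  "str_code x = list_encode (map sym_code x)"

text \<open>Strings over Y = {0..D-1} are nat lists w with set w \<subseteq> {..<D}; they are
  encoded by list_encode.\<close>

definition seqspace :: "(nat \<Rightarrow> 'a) measure" where
  "seqspace = PiM UNIV (\<lambda>_. count_space UNIV)"

definition cyl :: "'a list \<Rightarrow> (nat \<Rightarrow> 'a) set" where
  "cyl x = {\<omega>. \<forall>i<length x. \<omega> i = x ! i}"

definition pref :: "(nat \<Rightarrow> 'a) \<Rightarrow> nat \<Rightarrow> 'a list" where
  "pref \<omega> n = map \<omega> [0..<n]"

definition computable_measure :: "nat \<Rightarrow> (nat \<Rightarrow> 'a::countable) measure \<Rightarrow> bool" where
  "computable_measure D P \<longleftrightarrow>
     (\<exists>f. computable1 f \<and>
        (\<forall>x m. f (prod_encode (str_code x, m)) = Some (nat \<lfloor>measure P (cyl x) * real D ^ m\<rfloor>)))"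

definition nat_prefix_code :: "nat \<Rightarrow> (nat \<Rightarrow> nat list) \<Rightarrow> bool" where
  "nat_prefix_code D c \<longleftrightarrow> (\<forall>n. c n \<noteq> [] \<and> set (c n) \<subseteq> {..<D}) \<and>
     (\<forall>m n. prefix (c m) (c n) \<longrightarrow> m = n)"

definition computable_nat_code :: "nat \<Rightarrow> (nat \<Rightarrow> nat list) \<Rightarrow> bool" where
  "computable_nat_code D c \<longleftrightarrow> nat_prefix_code D c \<and>
     computable1 (\<lambda>k. Some (list_encode (c k))) \<and>
     (\<exists>g. computable1 g \<and> (\<forall>w. set w \<subseteq> {..<D} \<longrightarrow>
         g (list_encode w) = (if w \<in> range c then Some (inv c w) else None)))"

definition prefix_code :: "nat \<Rightarrow> ('a list \<Rightarrow> nat list option) \<Rightarrow> bool" where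
  "prefix_code D C \<longleftrightarrow> (\<forall>x w. C x = Some w \<longrightarrow> set w \<subseteq> {..<D}) \<and>
     (\<forall>x y u v. C x = Some u \<longrightarrow> C y = Some v \<longrightarrow> prefix u v \<longrightarrow> x = y)"

definition computable_code :: "nat \<Rightarrow> ('a::countable list \<Rightarrow> nat list option) \<Rightarrow> bool" where
  "computable_code D C \<longleftrightarrow>
     (\<exists>f. computable1 f \<and> (\<forall>x. f (str_code x) = map_option list_encode (C x))) \<and>
     (\<exists>g. computable1 g \<and> (\<forall>w. set w \<subseteq> {..<D} \<longrightarrow>
         g (list_encode w) = (if \<exists>x. C x = Some w
                              then Some (str_code (THE x. C x = Some w)) else None)))"

definition prefix_machine :: "nat \<Rightarrow> (nat list \<Rightarrow> 'a::countable list option) \<Rightarrow> bool" where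
  "prefix_machine D M \<longleftrightarrow> (\<forall>p. M p \<noteq> None \<longrightarrow> set p \<subseteq> {..<D}) \<and>
     (\<forall>p q. M p \<noteq> None \<longrightarrow> M q \<noteq> None \<longrightarrow> prefix p q \<longrightarrow> p = q) \<and>
     (\<exists>f. computable1 f \<and> (\<forall>p. set p \<subseteq> {..<D} \<longrightarrow>
         f (list_encode p) = map_option str_code (M p)))"

definition universal_prefix_machine :: "nat \<Rightarrow> (nat list \<Rightarrow> 'a::countable list option) \<Rightarrow> bool" where
  "universal_prefix_machine D U \<longleftrightarrow> prefix_machine D U \<and>
     (\<forall>M. prefix_machine D M \<longrightarrow> (\<exists>\<sigma>. set \<sigma> \<subseteq> {..<D} \<and> (\<forall>p. U (\<sigma> @ p) = M p)))"

definition KC :: "(nat list \<Rightarrow> 'a list option) \<Rightarrow> 'a list \<Rightarrow> nat" where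
  "KC U x = (LEAST n. \<exists>p. U p = Some x \<and> length p = n)"

text \<open>Since log 0 = -infinity mathematically, K(x^n) + log P(x^n) > 0 includes P(x^n) > 0.\<close>
definition barron_random :: "nat \<Rightarrow> (nat list \<Rightarrow> 'a list option) \<Rightarrow> (nat \<Rightarrow> 'a) measure \<Rightarrow> (nat \<Rightarrow> 'a) set" where
  "barron_random D U P = {\<omega>. \<forall>\<^sub>F n in sequentially.
      measure P (cyl (pref \<omega> n)) > 0 \<and>
      real (KC U (pref \<omega> n)) + log (real D) (measure P (cyl (pref \<omega> n))) > 0}"

definition shannon_fano_code :: "nat \<Rightarrow> (nat \<Rightarrow> 'a) measure \<Rightarrow> ('a list \<Rightarrow> nat list option) \<Rightarrow> bool" where
  "shannon_fano_code D P C' \<longleftrightarrow>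
     (\<forall>x. C' x \<noteq> None \<longleftrightarrow> measure P (cyl x) > 0) \<and>
     (\<forall>x w. C' x = Some w \<longrightarrow> set w \<subseteq> {..<D} \<and>
        length w = nat \<lceil>- log (real D) (measure P (cyl x))\<rceil>) \<and>
     (\<forall>x y u v. length x = length y \<longrightarrow> x \<noteq> y \<longrightarrow> C' x = Some u \<longrightarrow> C' y = Some v \<longrightarrow>
        \<not> prefix u v)"

definition bayes_code :: "(nat \<Rightarrow> nat list) \<Rightarrow> ('a list \<Rightarrow> nat list option) \<Rightarrow> 'a list \<Rightarrow> nat list option" where
  "bayes_code c C' x = map_option (\<lambda>w. c (length x) @ w) (C' x)"

end

theory Submission
  imports Defs
begin



definition T :: "nat \<Rightarrow> (nat list \<Rightarrow> nat) \<Rightarrow> bool" where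
  "T n h \<longleftrightarrow> partrec n (\<lambda>xs. Some (h xs))"

lemma T_ext: "T n f \<Longrightarrow> (\<And>xs. length xs = n \<Longrightarrow> g xs = f xs) \<Longrightarrow> T n g"
  unfolding T_def by (rule partrec.ext) auto

lemma T_zero: "T n (\<lambda>_. 0)"
  unfolding T_def by (rule partrec.zero)

lemma T_succ: "T 1 (\<lambda>xs. Suc (hd xs))"
  unfolding T_def by (rule partrec.succ)

lemma T_proj: "i < n \<Longrightarrow> T n (\<lambda>xs. xs ! i)"
  unfolding T_def by (rule partrec.proj)

lemma T_comp: "T m g \<Longrightarrow> (\<And>i. i < m \<Longrightarrow> T n (fs i)) \<Longrightarrow>
   T n (\<lambda>xs. g (map (\<lambda>i. fs i xs) [0..<m]))"
  unfolding T_def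
  apply (drule partrec.comp[where fs="\<lambda>i xs. Some (fs i xs)"])
   apply auto
  done

lemma prec_Some: "prec (\<lambda>xs. Some (f xs)) (\<lambda>xs. Some (g xs)) y zs
   = Some (rec_nat (f zs) (\<lambda>y r. g (y # r # zs)) y)"
  by (induction y) auto

lemma T_prim: "T n f \<Longrightarrow> T (Suc (Suc n)) g \<Longrightarrow>
   T (Suc n) (\<lambda>xs. rec_nat (f (tl xs)) (\<lambda>y r. g (y # r # tl xs)) (hd xs))"
  unfolding T_def
  apply (drule (1) partrec.prim)
  apply (simp add: prec_Some)
  done

lemma T_reindex:
  assumes "T m h" "\<And>i. i < m \<Longrightarrow> \<sigma> i < n"
    and "\<And>xs. length xs = n \<Longrightarrow> g xs = h (map (\<lambda>i. xs ! \<sigma> i) [0..<m])"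
  shows "T n g"
  using T_comp[OF assms(1), of n "\<lambda>i xs. xs ! \<sigma> i"] T_proj assms(2,3)
  by (auto intro: T_ext)

lemma T_rec:
  assumes c: "T n cnt" and b: "T n base" and s: "T (Suc (Suc n)) step"
  shows "T n (\<lambda>xs. rec_nat (base xs) (\<lambda>y r. step (y # r # xs)) (cnt xs))"
proof -
  have R: "T (Suc n) (\<lambda>xs. rec_nat (base (tl xs)) (\<lambda>y r. step (y # r # tl xs)) (hd xs))"
    by (rule T_prim[OF b s])
  have "T n (\<lambda>xs. (\<lambda>ys. rec_nat (base (tl ys)) (\<lambda>y r. step (y # r # tl ys)) (hd ys))
           (map (\<lambda>i. (\<lambda>i xs. if i = 0 then cnt xs else xs ! (i - 1)) i xs) [0..<Suc n]))"
  proof (rule T_comp[OF R])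
    fix i assume "i < Suc n"
    then show "T n (\<lambda>xs. if i = 0 then cnt xs else xs ! (i - 1))"
      by (cases "i = 0") (auto simp: c intro: T_proj)
  qed
  moreover have "\<And>xs. length xs = n \<Longrightarrow>
     map (\<lambda>i. (\<lambda>i xs. if i = 0 then cnt xs else xs ! (i - 1)) i xs) [0..<Suc n] = cnt xs # xs"
    by (rule nth_equalityI) (auto simp: nth_Cons' simp del: upt_Suc)
  ultimately show ?thesis by (elim T_ext) (simp del: upt_Suc)
qed


lemma T_lift1: "T 1 (\<lambda>xs. h (xs ! 0)) \<Longrightarrow> T n f \<Longrightarrow> T n (\<lambda>xs. h (f xs))"
  by (drule T_comp[where fs="\<lambda>i. f" and n=n]) auto

lemma T_lift2: "T 2 (\<lambda>xs. h (xs ! 0) (xs ! 1)) \<Longrightarrow> T n f \<Longrightarrow> T n g \<Longrightarrow> T n (\<lambda>xs. h (f xs) (g xs))"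
  apply (drule T_comp[where fs="\<lambda>i. if i = 0 then f else g" and n=n])
   apply (auto simp: numeral_2_eq_2)
  done

lemma T_lift3: "T 3 (\<lambda>xs. h (xs ! 0) (xs ! 1) (xs ! 2)) \<Longrightarrow> T n f \<Longrightarrow> T n g \<Longrightarrow> T n k \<Longrightarrow>
   T n (\<lambda>xs. h (f xs) (g xs) (k xs))"
  apply (drule T_comp[where fs="\<lambda>i. if i = 0 then f else if i = 1 then g else k" and n=n])
   apply (auto simp: numeral_3_eq_3)
  done

lemma T_tl: "T n g \<Longrightarrow> T (Suc n) (\<lambda>ys. g (tl ys))"
  apply (erule T_reindex[where \<sigma>=Suc])
   apply simp
  apply (rule arg_cong[where f=g])
  apply (rule nth_equalityI) apply auto
  by (metis list.sel(3) list.size(3) nat.distinct(1) neq_Nil_conv nth_Cons_Suc)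

lemma T_drop1: "T (Suc n) g \<Longrightarrow> T (Suc (Suc n)) (\<lambda>ys. g (hd ys # drop 2 ys))"
  apply (erule T_reindex[where \<sigma>="\<lambda>i. if i = 0 then 0 else Suc i"])
   apply simp
  apply (rule arg_cong[where f=g])
  apply (case_tac xs, simp, case_tac list, simp)
  apply (rule nth_equalityI) apply (auto simp: nth_Cons' simp del: upt_Suc)
  done

lemma hd_nth_len[simp]: "length xs = Suc n \<Longrightarrow> hd xs = xs ! 0" by (cases xs) auto

lemma nth_12[simp]: "(a # b # xs) ! 1 = b" "(a # b # c # xs) ! 2 = c" "drop 2 (a # b # xs) = xs"
   "(a # b # c # d # xs) ! 3 = d"
  by (simp_all add: numeral_2_eq_2 numeral_3_eq_3)

lemma T_proj': "T n (\<lambda>xs. xs ! i)" if "i < n" using T_proj that .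

lemma T_const: "T n (\<lambda>_. c)"
proof (induction c)
  case 0 then show ?case by (rule T_zero)
next
  case (Suc c)
  have "T 1 (\<lambda>xs. Suc (xs ! 0))" by (rule T_ext[OF T_succ]) (auto simp: hd_conv_nth)
  from T_lift1[OF this Suc] show ?case .
qed

lemma T_id: "T (Suc n) hd"
  by (rule T_ext[OF T_proj[of 0]]) (auto simp: hd_conv_nth)

lemma rec_nat_fcong: assumes "\<And>y r. f y r = g y r" shows "rec_nat a f n = rec_nat a g n"
proof -
  have "f = g" using assms by (auto intro!: ext)
  then show ?thesis by simp
qed

lemma T_rec2:
  assumes "T n cnt" "T n base" "T (Suc (Suc n)) step"
    and "\<And>xs. length xs = n \<Longrightarrow> F xs = rec_nat (base xs) (\<lambda>y r. step (y # r # xs)) (cnt xs)"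
  shows "T n F"
  using T_rec[OF assms(1-3)] assms(4) by (rule T_ext)

lemma rn_add: "rec_nat a (\<lambda>y r. Suc r) b = a + b" by (induct b) auto
lemma rn_pred: "rec_nat 0 (\<lambda>y r. y) b = b - Suc 0" by (induct b) auto
lemma rn_sub: "rec_nat a (\<lambda>y r. r - Suc 0) b = a - b" by (induct b) auto
lemma rn_mult: "rec_nat 0 (\<lambda>y r. r + a) b = a * b" by (induct b) auto
lemma rn_pow: "rec_nat (Suc 0) (\<lambda>y r. r * a) b = a ^ b" by (induct b) (simp_all add: power_commutes)

lemma T2_add: "T 2 (\<lambda>xs. xs ! 0 + xs ! 1)"
proof (rule T_rec2[where cnt="\<lambda>xs. xs!1" and base="\<lambda>xs. xs!0" and step="\<lambda>ys. Suc (ys!1)"])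
  show "T (Suc (Suc 2)) (\<lambda>ys. Suc (ys ! 1))"
    by (rule T_lift1[OF T_ext[OF T_succ] T_proj]) auto
qed (auto intro: T_proj simp: rn_add)

lemma T_add[intro]: "T n f \<Longrightarrow> T n g \<Longrightarrow> T n (\<lambda>xs. f xs + g xs)"
  by (rule T_lift2[OF T2_add])

lemma T2_sub: "T 2 (\<lambda>xs. xs ! 0 - xs ! 1)"
proof (rule T_rec2[where cnt="\<lambda>xs. xs!1" and base="\<lambda>xs. xs!0" and step="\<lambda>ys. ys!1 - 1"])
  show "T (Suc (Suc 2)) (\<lambda>ys. ys ! 1 - 1)"
  proof (rule T_lift1[OF _ T_proj])
    show "T 1 (\<lambda>xs. xs ! 0 - 1)"
      by (rule T_rec2[where cnt="\<lambda>xs. xs!0" and base="\<lambda>_. 0" and step="\<lambda>ys. ys!0"])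
         (auto intro: T_proj T_const simp: rn_pred)
  qed simp
qed (auto intro: T_proj simp: rn_sub)

lemma T_sub[intro]: "T n f \<Longrightarrow> T n g \<Longrightarrow> T n (\<lambda>xs. f xs - g xs)"
  by (rule T_lift2[OF T2_sub])

lemma T2_mult: "T 2 (\<lambda>xs. xs ! 0 * xs ! 1)"
  by (rule T_rec2[where cnt="\<lambda>xs. xs!1" and base="\<lambda>_. 0" and step="\<lambda>ys. ys!1 + ys!2"])
     (auto intro!: T_proj T_const T_add simp: rn_mult)

lemma T_mult[intro]: "T n f \<Longrightarrow> T n g \<Longrightarrow> T n (\<lambda>xs. f xs * g xs)"
  by (rule T_lift2[OF T2_mult])

lemma T2_pow: "T 2 (\<lambda>xs. xs ! 0 ^ xs ! 1)"
  by (rule T_rec2[where cnt="\<lambda>xs. xs!1" and base="\<lambda>_. 1" and step="\<lambda>ys. ys!1 * ys!2"])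
     (auto intro!: T_proj T_const T_mult simp: rn_pow)

lemma T_pow[intro]: "T n f \<Longrightarrow> T n g \<Longrightarrow> T n (\<lambda>xs. f xs ^ g xs)"
  by (rule T_lift2[OF T2_pow])

lemmas T_basic[intro] = T_const T_proj'

definition TP :: "nat \<Rightarrow> (nat list \<Rightarrow> bool) \<Rightarrow> bool" where
  "TP n P \<longleftrightarrow> T n (\<lambda>xs. if P xs then 1 else 0)"

lemma TP_less[intro]: "T n f \<Longrightarrow> T n g \<Longrightarrow> TP n (\<lambda>xs. f xs < g xs)"
  unfolding TP_def
  apply (rule T_ext[where f="\<lambda>xs. 1 - (1 - (g xs - f xs))"]) apply (intro T_sub T_const) apply assumption+ apply auto done

lemma TP_not[intro]: "TP n P \<Longrightarrow> TP n (\<lambda>xs. \<not> P xs)"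
  unfolding TP_def
  apply (rule T_ext[where f="\<lambda>xs. 1 - (if P xs then 1 else 0)"]) apply (intro T_sub T_const) apply assumption+ apply auto done

lemma TP_and[intro]: "TP n P \<Longrightarrow> TP n Q \<Longrightarrow> TP n (\<lambda>xs. P xs \<and> Q xs)"
  unfolding TP_def
  apply (rule T_ext[where f="\<lambda>xs. (if P xs then 1 else 0) * (if Q xs then 1 else 0)"]) apply (intro T_mult) apply assumption+ apply auto done

lemma TP_or[intro]: "TP n P \<Longrightarrow> TP n Q \<Longrightarrow> TP n (\<lambda>xs. P xs \<or> Q xs)"
  using TP_not[OF TP_and[OF TP_not TP_not]] by simp

lemma TP_le[intro]: "T n f \<Longrightarrow> T n g \<Longrightarrow> TP n (\<lambda>xs. f xs \<le> g xs)"
  using TP_not[OF TP_less, of n g f] by (simp add: not_less)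

lemma TP_eq[intro]: "T n f \<Longrightarrow> T n g \<Longrightarrow> TP n (\<lambda>xs. f xs = g xs)"
  using TP_and[OF TP_le TP_le, of n f g g f] by (simp add: order_eq_iff)

lemma TP_const[intro]: "TP n (\<lambda>_. b)"
  unfolding TP_def by (cases b) auto

lemma T_if[intro]: "TP n P \<Longrightarrow> T n f \<Longrightarrow> T n g \<Longrightarrow> T n (\<lambda>xs. if P xs then f xs else g xs)"
  unfolding TP_def
  apply (rule T_ext[where f="\<lambda>xs. (if P xs then 1 else 0) * f xs + (1 - (if P xs then 1 else 0)) * g xs"])
    apply (intro T_sub T_const T_add T_mult) apply assumption+ apply auto done

lemma TP_T: "TP n P \<Longrightarrow> T n (\<lambda>xs. if P xs then 1 else 0)" unfolding TP_def .

lemma TP_tl: "TP n P \<Longrightarrow> TP (Suc n) (\<lambda>ys. P (tl ys))" unfolding TP_def by (rule T_tl)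
lemma TP_drop1: "TP (Suc n) P \<Longrightarrow> TP (Suc (Suc n)) (\<lambda>ys. P (hd ys # drop 2 ys))"
  unfolding TP_def by (rule T_drop1)

lemma T_drop2: "T n g \<Longrightarrow> T (Suc (Suc n)) (\<lambda>ys. g (drop 2 ys))"
  using T_tl[OF T_tl[of n g]] by (simp add: numeral_2_eq_2 drop_Suc)

fun bmin :: "nat \<Rightarrow> (nat \<Rightarrow> bool) \<Rightarrow> nat" where
  "bmin 0 p = 0"
| "bmin (Suc y) p = (if bmin y p < y then bmin y p else if p y then y else Suc y)"

declare bmin.simps[simp del]

lemma bmin_spec: "bmin N p = (if \<exists>j<N. p j then LEAST j. p j else N)"
proof (induction N)
  case 0 then show ?case by (simp add: bmin.simps)
next
  case (Suc N)
  show ?case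
  proof (cases "\<exists>j<N. p j")
    case True
    then have "(LEAST j. p j) < N" by (meson LeastI_ex Least_le order_le_less_trans)
    moreover have "\<exists>j<Suc N. p j" using True by (meson less_SucI)
    ultimately show ?thesis using True Suc by (simp add: bmin.simps)
  next
    case False
    then have "(\<exists>j<Suc N. p j) \<longleftrightarrow> p N" by (auto simp: less_Suc_eq)
    moreover have "p N \<Longrightarrow> (LEAST j. p j) = N"
      using False by (intro Least_equality) (auto simp: not_less[symmetric])
    ultimately show ?thesis using False Suc by (auto simp: bmin.simps)
  qed
qed

lemma bmin_less_iff: "bmin N p < N \<longleftrightarrow> (\<exists>j<N. p j)"
proof (cases "\<exists>j<N. p j")
  case True
  then obtain j where "j < N" "p j" by blast
  then have "(LEAST j. p j) < N" by (meson Least_le order_le_less_trans)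
  with True show ?thesis by (simp add: bmin_spec)
qed (auto simp add: bmin_spec)

lemma bmin_rec: "bmin N p = rec_nat 0 (\<lambda>y r. if r < y then r else if p y then y else Suc y) N"
  by (induct N) (auto simp: bmin.simps)

lemma T_Suc[intro]: "T n f \<Longrightarrow> T n (\<lambda>xs. Suc (f xs))"
  using T_add[OF _ T_const, of n f 1] by simp

lemma T_bmin[intro]: "TP (Suc n) P \<Longrightarrow> T n N \<Longrightarrow> T n (\<lambda>xs. bmin (N xs) (\<lambda>j. P (j # xs)))"
  apply (rule T_rec2[where cnt=N and base="\<lambda>_. 0"
     and step="\<lambda>ys. if ys!1 < ys!0 then ys!1 else if P (hd ys # drop 2 ys) then ys!0 else Suc (ys!0)"])
     apply assumption
    apply (rule T_const)
   apply (rule T_if)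
     apply (rule TP_less; rule T_proj'; simp)
    apply (rule T_proj'; simp)
   apply (rule T_if)
     apply (erule TP_drop1)
    apply (rule T_proj'; simp)
   apply (rule T_Suc, rule T_proj'; simp)
  apply (simp add: bmin_rec)
  apply (rule rec_nat_fcong) apply simp
  done

lemma sum_rec: "(\<Sum>j<N. g j) = rec_nat 0 (\<lambda>y r. r + g y) N"
  by (induct N) auto

lemma T_sum[intro]: "T (Suc n) f \<Longrightarrow> T n N \<Longrightarrow> T n (\<lambda>xs. \<Sum>j<N xs. f (j # xs))"
  apply (rule T_rec2[where cnt=N and base="\<lambda>_. 0" and step="\<lambda>ys. ys!1 + f (hd ys # drop 2 ys)"])
     apply assumption
    apply (rule T_const)
   apply (rule T_add, rule T_proj', simp, erule T_drop1)
  apply (simp add: sum_rec)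
  done

lemma TP_bex[intro]: assumes "TP (Suc n) P" "T n N" shows "TP n (\<lambda>xs. \<exists>j<N xs. P (j # xs))"
proof -
  have "TP n (\<lambda>xs. bmin (N xs) (\<lambda>j. P (j#xs)) < N xs)" using T_bmin[OF assms] assms(2) by (rule TP_less)
  then show ?thesis by (simp add: bmin_less_iff)
qed

lemma TP_ball[intro]: "TP (Suc n) P \<Longrightarrow> T n N \<Longrightarrow> TP n (\<lambda>xs. \<forall>j<N xs. P (j # xs))"
  using TP_not[OF TP_bex[OF TP_not]] by simp


lemma T_id0: "T n (\<lambda>xs. xs ! i) \<Longrightarrow> True" by simp

lemma div_as_bmin: "0 < d \<Longrightarrow> x div d = bmin (Suc x) (\<lambda>q. x < Suc q * d)"
proof -
  assume d: "0 < d"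
  have ex: "x < Suc (x div d) * d"
  proof -
    have e: "x div d * d + x mod d = x" by (rule div_mult_mod_eq)
    have "x mod d < d" using d by simp
    moreover have "Suc (x div d) * d = x div d * d + d" by simp
    ultimately show ?thesis using e by linarith
  qed
  have le: "x div d < Suc x" by (rule le_imp_less_Suc[OF div_le_dividend])
  have "(LEAST q. x < Suc q * d) = x div d"
  proof (rule Least_equality)
    show "x < Suc (x div d) * d" by (rule ex)
    fix q assume "x < Suc q * d"
    then have "x div d < Suc q" using d by (simp add: div_less_iff_less_mult)
    then show "x div d \<le> q" by simp
  qed
  moreover have "\<exists>j<Suc x. x < Suc j * d" using ex le by blast
  ultimately show ?thesis by (simp add: bmin_spec)
qed

lemma T2_div: "T 2 (\<lambda>xs. xs ! 0 div xs ! 1)"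
proof -
  have P: "TP (Suc 2) (\<lambda>ys. ys!1 < Suc (ys!0) * ys!2)"
    by (intro TP_less T_mult T_Suc T_proj') auto
  have "T 2 (\<lambda>xs. if xs!1 = 0 then 0 else bmin (Suc (xs!0)) (\<lambda>j. (j # xs)!1 < Suc ((j # xs)!0) * (j#xs)!2))"
    by (intro T_if TP_eq T_proj' T_const T_bmin[OF P] T_Suc) auto
  then show ?thesis by (rule T_ext) (auto simp: div_as_bmin)
qed

lemma T_div[intro]: "T n f \<Longrightarrow> T n g \<Longrightarrow> T n (\<lambda>xs. f xs div g xs)"
  by (rule T_lift2[OF T2_div])

lemma T_mod[intro]: "T n f \<Longrightarrow> T n g \<Longrightarrow> T n (\<lambda>xs. f xs mod g xs)"
proof -
  assume a: "T n f" "T n g"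
  have "T n (\<lambda>xs. f xs - g xs * (f xs div g xs))" using a by (intro T_sub T_mult T_div)
  then show ?thesis by (rule T_ext) (simp add: minus_mult_div_eq_mod)
qed

lemma triangle_rec: "triangle n = rec_nat 0 (\<lambda>y r. r + Suc y) n"
  by (induct n) auto

lemma T1_triangle: "T 1 (\<lambda>xs. triangle (xs ! 0))"
  by (rule T_rec2[where cnt="\<lambda>xs. xs!0" and base="\<lambda>_. 0" and step="\<lambda>ys. ys!1 + Suc (ys!0)"])
     (auto intro!: T_add T_Suc T_proj' simp: triangle_rec intro: rec_nat_fcong)

lemma T_triangle[intro]: "T n f \<Longrightarrow> T n (\<lambda>xs. triangle (f xs))"
  by (rule T_lift1[OF T1_triangle])

lemma T_pe[intro]: "T n f \<Longrightarrow> T n g \<Longrightarrow> T n (\<lambda>xs. prod_encode (f xs, g xs))"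
proof -
  assume a: "T n f" "T n g"
  have "T n (\<lambda>xs. triangle (f xs + g xs) + f xs)" using a by (intro T_add T_triangle)
  then show ?thesis by (rule T_ext) (simp add: prod_encode_def)
qed

lemma triangle_mono_Suc: "k < j \<Longrightarrow> triangle (Suc k) \<le> triangle j"
proof (induction j)
  case (Suc j) then show ?case by (cases "k = j") auto
qed simp

definition tri_root :: "nat \<Rightarrow> nat" where
  "tri_root m = bmin (Suc m) (\<lambda>k. m < triangle (Suc k))"

lemma le_triangle: "n \<le> triangle n" by (induct n) auto

lemma tri_root_pd: "tri_root m = fst (prod_decode m) + snd (prod_decode m)"
proof -
  obtain a b where ab: "prod_decode m = (a, b)" by (cases "prod_decode m")
  have m: "m = triangle (a + b) + a"
    using prod_decode_inverse[of m] ab by (simp add: prod_encode_def)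
  have L: "(LEAST k. m < triangle (Suc k)) = a + b"
  proof (rule Least_equality)
    show "m < triangle (Suc (a + b))" using m by simp
    fix k assume k: "m < triangle (Suc k)"
    show "a + b \<le> k"
    proof (rule ccontr)
      assume "\<not> a + b \<le> k"
      then have "k < a + b" by simp
      then have "triangle (Suc k) \<le> triangle (a + b)" by (rule triangle_mono_Suc)
      with m k show False by simp
    qed
  qed
  have "a + b \<le> triangle (a + b)" by (rule le_triangle)
  then have "a + b < Suc m" using m by simp
  moreover have "m < triangle (Suc (a + b))" using m by simp
  ultimately have "\<exists>j<Suc m. m < triangle (Suc j)" by blast
  then show ?thesis using L ab unfolding tri_root_def bmin_spec by simp
qed

lemma T_tri_root[intro]: "T n f \<Longrightarrow> T n (\<lambda>xs. tri_root (f xs))"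
proof -
  have P: "TP (Suc 1) (\<lambda>ys. ys!1 < triangle (Suc (ys!0)))"
    apply (rule TP_less) apply (rule T_proj') apply simp apply (rule T_triangle) apply (rule T_Suc) apply (rule T_proj') apply simp done
  have "T 1 (\<lambda>xs. bmin (Suc (xs!0)) (\<lambda>j. (j # xs)!1 < triangle (Suc ((j # xs)!0))))"
    apply (rule T_bmin[OF P]) apply (rule T_Suc) apply (rule T_proj') apply simp done
  then have "T 1 (\<lambda>xs. tri_root (xs ! 0))" by (rule T_ext) (simp add: tri_root_def)
  then show "T n f \<Longrightarrow> T n (\<lambda>xs. tri_root (f xs))" by (rule T_lift1)
qed

lemma pd_fst: "fst (prod_decode m) = m - triangle (tri_root m)"
proof -
  obtain a b where ab: "prod_decode m = (a, b)" by (cases "prod_decode m")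
  have m: "m = triangle (a + b) + a"
    using prod_decode_inverse[of m] ab by (simp add: prod_encode_def)
  show ?thesis using ab m by (simp add: tri_root_pd)
qed

lemma pd_snd: "snd (prod_decode m) = tri_root m - (m - triangle (tri_root m))"
  using tri_root_pd[of m] pd_fst[of m] by simp

lemma T_fst_pd[intro]: "T n f \<Longrightarrow> T n (\<lambda>xs. fst (prod_decode (f xs)))"
  unfolding pd_fst by (intro T_sub T_triangle T_tri_root)

lemma T_snd_pd[intro]: "T n f \<Longrightarrow> T n (\<lambda>xs. snd (prod_decode (f xs)))"
  unfolding pd_snd by (intro T_sub T_triangle T_tri_root)


definition hdc :: "nat \<Rightarrow> nat" where "hdc L = fst (prod_decode (L - 1))"
definition tlc :: "nat \<Rightarrow> nat" where "tlc L = snd (prod_decode (L - 1))"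

lemma hdc_Cons[simp]: "hdc (Suc (prod_encode (x, y))) = x"
  by (simp add: hdc_def)
lemma tlc_Cons[simp]: "tlc (Suc (prod_encode (x, y))) = y"
  by (simp add: tlc_def)
lemma tlc_0[simp]: "tlc 0 = 0"
  by (simp add: tlc_def prod_decode_def prod_decode_aux.simps)
lemma tlc_tl: "tlc (list_encode zs) = list_encode (tl zs)"
  by (cases zs) auto

lemma T_hdc[intro]: "T n f \<Longrightarrow> T n (\<lambda>xs. hdc (f xs))"
  unfolding hdc_def by (intro T_fst_pd T_sub T_const)
lemma T_tlc[intro]: "T n f \<Longrightarrow> T n (\<lambda>xs. tlc (f xs))"
  unfolding tlc_def by (intro T_snd_pd T_sub T_const)

definition tls :: "nat \<Rightarrow> nat \<Rightarrow> nat" where "tls i L = rec_nat L (\<lambda>y r. tlc r) i"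

lemma tls_le: "tls i (list_encode xs) = list_encode (drop i xs)"
  by (induct i) (auto simp: tls_def tlc_tl drop_Suc tl_drop)

lemma T_tls[intro]: "T n f \<Longrightarrow> T n g \<Longrightarrow> T n (\<lambda>xs. tls (f xs) (g xs))"
proof -
  have "T 2 (\<lambda>xs. tls (xs ! 0) (xs ! 1))"
    apply (rule T_rec2[where cnt="\<lambda>xs. xs!0" and base="\<lambda>xs. xs!1" and step="\<lambda>ys. tlc (ys!1)"])
       apply (rule T_proj', simp)+
     apply (rule T_tlc, rule T_proj', simp)
    apply (simp add: tls_def)
    done
  then show "T n f \<Longrightarrow> T n g \<Longrightarrow> T n (\<lambda>xs. tls (f xs) (g xs))" by (rule T_lift2)
qed

lemma length_le_encode: "length xs \<le> list_encode xs"
proof (induct xs)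
  case (Cons x xs)
  then show ?case using le_prod_encode_2[of "list_encode xs" x] by simp
qed simp

definition lenc :: "nat \<Rightarrow> nat" where "lenc L = (\<Sum>j<L. if tls j L = 0 then 0 else 1)"

lemma sum_ind_less: "n \<le> L \<Longrightarrow> (\<Sum>j<L. if j < n then 1 else 0::nat) = n"
proof (induct L)
  case (Suc L) then show ?case by (cases "n = Suc L") (auto simp: sum.lessThan_Suc le_Suc_eq)
qed simp

lemma le_eq_0: "list_encode xs = 0 \<longleftrightarrow> xs = []"
  by (cases xs) auto

lemma lenc_le[simp]: "lenc (list_encode xs) = length xs"
proof -
  have "\<And>j. (tls j (list_encode xs) = 0) \<longleftrightarrow> \<not> j < length xs"
    by (auto simp: tls_le le_eq_0)
  then have "lenc (list_encode xs) = (\<Sum>j<list_encode xs. if j < length xs then 1 else 0)"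
    unfolding lenc_def by (intro sum.cong) auto
  also have "\<dots> = length xs" by (rule sum_ind_less[OF length_le_encode])
  finally show ?thesis .
qed

lemma T_lenc[intro]: "T n f \<Longrightarrow> T n (\<lambda>xs. lenc (f xs))"
proof -
  have "T 1 (\<lambda>xs. \<Sum>j<xs!0. (\<lambda>ys. if tls (ys!0) (ys!1) = 0 then 0 else 1) (j # xs))"
    apply (rule T_sum)
     apply (rule T_if) apply (rule TP_eq) apply (rule T_tls) apply (rule T_proj', simp)+ apply (rule T_const)+
    apply (rule T_proj', simp)
    done
  then have "T 1 (\<lambda>xs. lenc (xs ! 0))" by (rule T_ext) (simp add: lenc_def)
  then show "T n f \<Longrightarrow> T n (\<lambda>xs. lenc (f xs))" by (rule T_lift1)
qed

definition nthc :: "nat \<Rightarrow> nat \<Rightarrow> nat" where "nthc L i = hdc (tls i L)"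

lemma nthc_le: "i < length xs \<Longrightarrow> nthc (list_encode xs) i = xs ! i"
  by (simp add: nthc_def tls_le Cons_nth_drop_Suc[symmetric])

lemma T_nthc[intro]: "T n f \<Longrightarrow> T n g \<Longrightarrow> T n (\<lambda>xs. nthc (f xs) (g xs))"
  unfolding nthc_def by (intro T_hdc T_tls)

definition appc :: "nat \<Rightarrow> nat \<Rightarrow> nat" where
  "appc A B = rec_nat B (\<lambda>i r. Suc (prod_encode (nthc A (lenc A - Suc i), r))) (lenc A)"

lemma appc_aux: "i \<le> length xs \<Longrightarrow>
  rec_nat (list_encode ys) (\<lambda>i r. Suc (prod_encode (nthc (list_encode xs) (length xs - Suc i), r))) i
   = list_encode (drop (length xs - i) xs @ ys)"
proof (induct i)
  case (Suc i)
  then have i: "length xs - Suc i < length xs" by simp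
  have "drop (length xs - Suc i) xs = xs ! (length xs - Suc i) # drop (length xs - i) xs"
    using Cons_nth_drop_Suc[OF i] Suc.prems by (simp add: Suc_diff_Suc)
  then show ?case using Suc by (simp add: nthc_le[OF i])
qed simp

lemma appc_le[simp]: "appc (list_encode xs) (list_encode ys) = list_encode (xs @ ys)"
  unfolding appc_def using appc_aux[of "length xs" xs ys] by simp

lemma T_appc[intro]: "T n f \<Longrightarrow> T n g \<Longrightarrow> T n (\<lambda>xs. appc (f xs) (g xs))"
proof -
  have "T 2 (\<lambda>xs. rec_nat (xs!1) (\<lambda>y r. (\<lambda>ys. Suc (prod_encode (nthc (ys!2) (lenc (ys!2) - Suc (ys!0)), ys!1))) (y # r # xs)) (lenc (xs!0)))"
    apply (rule T_rec)
      apply (rule T_lenc, rule T_proj', simp)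
     apply (rule T_proj', simp)
    apply (rule T_Suc, rule T_pe, rule T_nthc, rule T_proj', simp, rule T_sub, rule T_lenc, rule T_proj', simp)
    apply (rule T_Suc, rule T_proj', simp, rule T_proj', simp)
    done
  then have "T 2 (\<lambda>xs. appc (xs!0) (xs!1))" by (rule T_ext) (simp add: appc_def)
  then show "T n f \<Longrightarrow> T n g \<Longrightarrow> T n (\<lambda>xs. appc (f xs) (g xs))" by (rule T_lift2)
qed

fun digs :: "nat \<Rightarrow> nat \<Rightarrow> nat \<Rightarrow> nat list" where
  "digs D 0 v = []"
| "digs D (Suc l) v = digs D l (v div D) @ [v mod D]"

lemma digs_Suc': "digs D (Suc l) v = (v div D ^ l) mod D # digs D l v"
proof (induct l arbitrary: v)
  case (Suc l)
  have "digs D (Suc (Suc l)) v = digs D (Suc l) (v div D) @ [v mod D]" by simp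
  also have "\<dots> = (((v div D) div D ^ l) mod D # digs D l (v div D)) @ [v mod D]" by (simp only: Suc)
  also have "\<dots> = (v div D ^ Suc l) mod D # digs D (Suc l) v" by (simp add: div_mult2_eq)
  finally show ?case .
qed simp

definition digc :: "nat \<Rightarrow> nat \<Rightarrow> nat \<Rightarrow> nat" where
  "digc D l v = rec_nat 0 (\<lambda>i r. Suc (prod_encode ((v div D ^ i) mod D, r))) l"

lemma digc_le: "digc D l v = list_encode (digs D l v)"
  by (induct l) (auto simp: digc_def digs_Suc' simp del: digs.simps(2))

lemma T_digc[intro]: "T n f \<Longrightarrow> T n g \<Longrightarrow> T n h \<Longrightarrow> T n (\<lambda>xs. digc (f xs) (g xs) (h xs))"
proof -
  have "T 3 (\<lambda>xs. rec_nat 0 (\<lambda>y r. (\<lambda>ys. Suc (prod_encode ((ys!4 div ys!2 ^ ys!0) mod ys!2, ys!1))) (y # r # xs)) (xs!1))"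
    apply (rule T_rec)
      apply (rule T_proj', simp)
     apply (rule T_const)
    apply (rule T_Suc, rule T_pe, rule T_mod, rule T_div, (rule T_proj', simp)+, rule T_pow, (rule T_proj', simp)+)
    done
  then have "T 3 (\<lambda>xs. digc (xs!0) (xs!1) (xs!2))" by (rule T_ext) (simp add: digc_def)
  then show "T n f \<Longrightarrow> T n g \<Longrightarrow> T n h \<Longrightarrow> T n (\<lambda>xs. digc (f xs) (g xs) (h xs))" by (rule T_lift3)
qed

lemma TP_memb[intro]: "T n f \<Longrightarrow> T n g \<Longrightarrow> TP n (\<lambda>xs. g xs \<in> set_decode (f xs))"
proof -
  assume a: "T n f" "T n g"
  have "TP n (\<lambda>xs. (f xs div 2 ^ g xs) mod 2 = 1)" using a by (intro TP_eq T_mod T_div T_pow T_const)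
  then show ?thesis by (simp add: set_decode_def odd_iff_mod_2_eq_one)
qed





definition anc :: "nat \<Rightarrow> nat \<times> nat \<Rightarrow> nat \<times> nat \<Rightarrow> bool" where
  "anc D p q \<longleftrightarrow> fst p \<le> fst q \<and> snd q div D ^ (fst q - fst p) = snd p"

definition disj :: "nat \<Rightarrow> nat \<times> nat \<Rightarrow> nat \<times> nat \<Rightarrow> bool" where
  "disj D p q \<longleftrightarrow> \<not> anc D p q \<and> \<not> anc D q p"

lemma div_pow_split: "k \<le> j \<Longrightarrow> j \<le> i \<Longrightarrow> c div (D::nat) ^ (i - j) div D ^ (j - k) = c div D ^ (i - k)"
proof -
  assume "k \<le> j" "j \<le> i"
  then have "i - k = (i - j) + (j - k)" by simp
  then have "D ^ (i - k) = D ^ (i - j) * D ^ (j - k)" by (simp add: power_add)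
  then show ?thesis by (simp add: div_mult2_eq)
qed

lemma anc_trans: "anc D p q \<Longrightarrow> anc D q r \<Longrightarrow> anc D p r"
  unfolding anc_def using div_pow_split[of "fst p" "fst q" "fst r" "snd r" D] by auto

lemma anc_comparable: "anc D p r \<Longrightarrow> anc D q r \<Longrightarrow> anc D p q \<or> anc D q p"
proof -
  assume a: "anc D p r" "anc D q r"
  have *: "anc D p q" if "fst p \<le> fst q" "anc D p r" "anc D q r" for p q
  proof -
    have "snd r div D ^ (fst r - fst q) div D ^ (fst q - fst p) = snd r div D ^ (fst r - fst p)"
      using that unfolding anc_def by (intro div_pow_split) auto
    then show ?thesis using that unfolding anc_def by auto
  qed
  show ?thesis using *[of p q] *[of q p] a by (cases "fst p \<le> fst q") auto
qed

lemma anc_desc: "t < D ^ m \<Longrightarrow> anc D (k, a) (k + m, a * D ^ m + t)"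
proof -
  assume t: "t < D ^ m"
  then have "D ^ m \<noteq> 0" by (metis not_less0 gr_implies_not0)
  then have "(t + a * D ^ m) div D ^ m = a + t div D ^ m" by (rule div_mult_self1)
  with t show ?thesis unfolding anc_def by (simp add: add.commute)
qed

lemma disj_desc: "disj D p q \<Longrightarrow> anc D q r \<Longrightarrow> disj D p r"
  unfolding disj_def using anc_trans anc_comparable by blast

lemma digs_length[simp]: "length (digs D l v) = l"
  by (induct l arbitrary: v) auto

lemma digs_set: "0 < D \<Longrightarrow> set (digs D l v) \<subseteq> {..<D}"
  by (induct l arbitrary: v) auto

lemma digs_add: "digs D (k + m) b = digs D k (b div D ^ m) @ digs D m b"
proof (induct m arbitrary: b)
  case (Suc m)
  have "digs D (k + Suc m) b = digs D (k + m) (b div D) @ [b mod D]" by simp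
  also have "\<dots> = digs D k (b div D div D ^ m) @ digs D m (b div D) @ [b mod D]" by (simp add: Suc)
  also have "\<dots> = digs D k (b div D ^ Suc m) @ digs D (Suc m) b" by (simp add: div_mult2_eq)
  finally show ?case .
qed simp

lemma digs_inj: "0 < D \<Longrightarrow> v < D ^ l \<Longrightarrow> w < D ^ l \<Longrightarrow> digs D l v = digs D l w \<Longrightarrow> v = w"
proof (induct l arbitrary: v w)
  case 0 then show ?case by simp
next
  case (Suc l)
  then have m: "v mod D = w mod D" and d: "digs D l (v div D) = digs D l (w div D)" by auto
  have "v div D < D ^ l" "w div D < D ^ l" using Suc.prems
    by (simp_all add: less_mult_imp_div_less mult.commute)
  with Suc.hyps[OF Suc.prems(1) _ _ d] have "v div D = w div D" by simp
  with m show ?case by (metis div_mult_mod_eq)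
qed

lemma prefix_digs: assumes D: "0 < D" and a: "a < D ^ k" and b: "b < D ^ j"
  and p: "prefix (digs D k a) (digs D j b)" shows "anc D (k, a) (j, b)"
proof -
  have kj: "k \<le> j" using prefix_length_le[OF p] by simp
  then have e: "digs D j b = digs D k (b div D ^ (j - k)) @ digs D (j - k) b"
    using digs_add[of D k "j - k" b] by simp
  from p obtain zs where "digs D j b = digs D k a @ zs" by (auto simp: prefix_def)
  with e have "digs D k a = digs D k (b div D ^ (j - k))"
    by (metis append_eq_append_conv digs_length)
  moreover have "b div D ^ (j - k) < D ^ k"
  proof -
    have "D ^ j = D ^ k * D ^ (j - k)" using kj by (simp add: power_add[symmetric])
    then show ?thesis using b D by (simp add: div_less_iff_less_mult mult.commute)
  qed
  ultimately have "a = b div D ^ (j - k)" using digs_inj[OF D a] by blast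
  then show ?thesis using kj unfolding anc_def by simp
qed

lemma disj_not_prefix: "0 < D \<Longrightarrow> snd p < D ^ fst p \<Longrightarrow> snd q < D ^ fst q \<Longrightarrow> disj D p q \<Longrightarrow>
   \<not> prefix (digs D (fst p) (snd p)) (digs D (fst q) (snd q))"
  using prefix_digs[of D "snd p" "fst p" "snd q" "fst q"] unfolding disj_def by auto


section \<open>Kraft-Chaitin allocation\<close>

definition wt :: "nat \<Rightarrow> nat \<Rightarrow> real" where "wt D k = (1 / real D) ^ k"

lemma wt_Suc: "0 < D \<Longrightarrow> real D * wt D (Suc n) = wt D n"
  by (simp add: wt_def)

lemma wt_pos: "0 < D \<Longrightarrow> 0 < wt D k" by (simp add: wt_def)

lemma geo: "0 < D \<Longrightarrow> (\<Sum>j<m. (real D - 1) * wt D (k + 1 + j)) + wt D (k + m) = wt D k"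
proof (induct m)
  case (Suc m)
  have "(\<Sum>j<Suc m. (real D - 1) * wt D (k + 1 + j)) + wt D (k + Suc m)
     = (\<Sum>j<m. (real D - 1) * wt D (k + 1 + j)) + (real D * wt D (Suc (k + m)))"
    by (simp add: algebra_simps)
  also have "\<dots> = wt D k" using Suc by (simp add: wt_Suc)
  finally show ?case .
qed simp

definition Fp :: "nat \<Rightarrow> (nat \<times> nat) set" where "Fp S = {p. prod_encode p \<in> set_decode S}"

lemma Fp_finite[simp]: "finite (Fp S)"
proof -
  have "Fp S \<subseteq> prod_decode ` set_decode S"
    unfolding Fp_def by (auto intro: image_eqI[where x="prod_encode _"])
  then show ?thesis by (rule finite_subset) simp
qed

lemma set_decode_Fp: "set_decode S = prod_encode ` Fp S"
  unfolding Fp_def by (auto intro: image_eqI[where x="prod_decode _"])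

lemma Fp_encode: "finite F \<Longrightarrow> Fp (set_encode (prod_encode ` F)) = F"
  unfolding Fp_def by (auto simp: inj_on_def)

definition exlev :: "nat \<Rightarrow> nat \<Rightarrow> nat \<Rightarrow> bool" where
  "exlev D S k \<longleftrightarrow> (\<exists>a<D ^ k. (k, a) \<in> Fp S)"
definition klev :: "nat \<Rightarrow> nat \<Rightarrow> nat \<Rightarrow> nat" where
  "klev D S l = l - bmin (Suc l) (\<lambda>j. exlev D S (l - j))"
definition aidx :: "nat \<Rightarrow> nat \<Rightarrow> nat \<Rightarrow> nat" where
  "aidx D S k = bmin (D ^ k) (\<lambda>a. (k, a) \<in> Fp S)"
definition newb :: "nat \<Rightarrow> nat \<Rightarrow> nat \<Rightarrow> nat \<Rightarrow> (nat \<times> nat) set" where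
  "newb D k a l = (\<lambda>(j, t). (k + 1 + j, a * D ^ (j + 1) + (t + 1))) ` ({..<l - k} \<times> {..<D - 1})"
definition kstep :: "nat \<Rightarrow> nat \<Rightarrow> nat \<Rightarrow> nat" where
  "kstep D S l = (let k = klev D S l; a = aidx D S k in
     S - 2 ^ prod_encode (k, a) + (\<Sum>j<l - k. \<Sum>t<D - 1. 2 ^ prod_encode (k + 1 + j, a * D ^ (j + 1) + (t + 1))))"
definition allocv :: "nat \<Rightarrow> nat \<Rightarrow> nat \<Rightarrow> nat" where
  "allocv D S l = aidx D S (klev D S l) * D ^ (l - klev D S l)"

definition kinv :: "nat \<Rightarrow> (nat \<times> nat) set \<Rightarrow> (nat \<times> nat) set \<Rightarrow> bool" where
  "kinv D F A \<longleftrightarrow> finite F \<and> finite A \<and> (\<forall>p\<in>F \<union> A. snd p < D ^ fst p) \<and> F \<inter> A = {} \<and>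
     (\<forall>p\<in>F \<union> A. \<forall>q\<in>F \<union> A. p \<noteq> q \<longrightarrow> disj D p q) \<and> (\<forall>k. card {a. (k, a) \<in> F} \<le> D - 1) \<and>
     (\<Sum>p\<in>F. wt D (fst p)) + (\<Sum>p\<in>A. wt D (fst p)) = 1"

lemma sum_levels:
  assumes "finite F"
  shows "(\<Sum>p\<in>F. wt D (fst p)) = (\<Sum>k\<in>fst ` F. real (card {a. (k, a) \<in> F}) * wt D k)"
proof -
  have "(\<Sum>p\<in>F. wt D (fst p)) = (\<Sum>k\<in>fst ` F. \<Sum>p\<in>{p\<in>F. fst p = k}. wt D (fst p))"
    by (rule sum.image_gen[OF assms])
  also have "\<dots> = (\<Sum>k\<in>fst ` F. real (card {p\<in>F. fst p = k}) * wt D k)"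
    by (intro sum.cong) auto
  also have "\<dots> = (\<Sum>k\<in>fst ` F. real (card {a. (k, a) \<in> F}) * wt D k)"
  proof (intro sum.cong refl arg_cong2[where f="(*)"] arg_cong[where f=real])
    fix k
    have "{p\<in>F. fst p = k} = Pair k ` {a. (k, a) \<in> F}" by force
    then show "card {p\<in>F. fst p = k} = card {a. (k, a) \<in> F}"
      by (simp add: card_image inj_on_def)
  qed
  finally show ?thesis .
qed

lemma exists_low:
  assumes D: "2 \<le> D" and inv: "kinv D F A" and c: "(\<Sum>p\<in>A. wt D (fst p)) + wt D l \<le> 1"
  shows "\<exists>p\<in>F. fst p \<le> l"
proof (rule ccontr)
  assume "\<not> ?thesis"
  then have hi: "\<forall>p\<in>F. l < fst p" by auto
  have fin: "finite F" using inv by (simp add: kinv_def)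
  have SF: "wt D l \<le> (\<Sum>p\<in>F. wt D (fst p))" using inv c by (simp add: kinv_def)
  have "F \<noteq> {}" using SF wt_pos[of D l] D by auto
  define K where "K = Max (fst ` F)"
  have sub: "fst ` F \<subseteq> {l + 1 + j | j. j < K - l}"
  proof
    fix k assume k: "k \<in> fst ` F"
    then have "k \<le> K" unfolding K_def using fin by simp
    moreover have "l < k" using k hi by auto
    ultimately show "k \<in> {l + 1 + j | j. j < K - l}" by (intro CollectI exI[of _ "k - l - 1"]) auto
  qed
  have "(\<Sum>p\<in>F. wt D (fst p)) = (\<Sum>k\<in>fst ` F. real (card {a. (k, a) \<in> F}) * wt D k)"
    by (rule sum_levels[OF fin])
  also have "\<dots> \<le> (\<Sum>k\<in>fst ` F. (real D - 1) * wt D k)"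
  proof (rule sum_mono)
    fix k
    have "card {a. (k, a) \<in> F} \<le> D - 1" using inv by (simp add: kinv_def)
    then have "real (card {a. (k, a) \<in> F}) \<le> real D - 1" using D by linarith
    then show "real (card {a. (k, a) \<in> F}) * wt D k \<le> (real D - 1) * wt D k"
      using wt_pos[of D k] D by (intro mult_right_mono) auto
  qed
  also have "\<dots> \<le> (\<Sum>k\<in>{l + 1 + j | j. j < K - l}. (real D - 1) * wt D k)"
    using sub D wt_pos[of D] by (intro sum_mono2) (auto intro!: mult_nonneg_nonneg less_imp_le)
  also have "\<dots> = (\<Sum>j<K - l. (real D - 1) * wt D (l + 1 + j))"
  proof -
    have "{l + 1 + j | j. j < K - l} = (\<lambda>j. l + 1 + j) ` {..<K - l}" by auto
    then show ?thesis by (simp add: sum.reindex inj_on_def)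
  qed
  also have "\<dots> = wt D l - wt D (l + (K - l))" using geo[of D, where m="K - l" and k=l] D by simp
  also have "\<dots> < wt D l" using wt_pos[of D] D by simp
  finally show False using SF by simp
qed


lemma anc_g:
  assumes D: "0 < D" and "anc D (k + mm, a * D ^ mm + u) (k + mm', a * D ^ mm' + u')"
  shows "mm \<le> mm' \<and> u' div D ^ (mm' - mm) = u"
proof -
  have le: "mm \<le> mm'" using assms(2) unfolding anc_def by simp
  have eq: "a * D ^ mm' = (a * D ^ mm) * D ^ (mm' - mm)" using le by (simp add: power_add[symmetric])
  have b: "D ^ (mm' - mm) \<noteq> 0" using D by simp
  have "(a * D ^ mm' + u') div D ^ (mm' - mm) = (u' + (a * D ^ mm) * D ^ (mm' - mm)) div D ^ (mm' - mm)"
    by (subst eq) (simp add: add.commute)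
  also have "\<dots> = a * D ^ mm + u' div D ^ (mm' - mm)" using div_mult_self1[OF b] by simp
  finally have "(a * D ^ mm' + u') div D ^ (mm' - mm) = a * D ^ mm + u' div D ^ (mm' - mm)" .
  then show ?thesis using assms(2) le unfolding anc_def by simp
qed

lemma disj_sym: "disj D p q = disj D q p" unfolding disj_def by auto
lemma not_disj_self: "\<not> disj D p p" unfolding disj_def anc_def by simp

lemma kstep_core:
  assumes D: "2 \<le> D" and inv: "kinv D F A" and kaF: "(k, a) \<in> F" and kl: "k \<le> l"
    and gap: "\<forall>k'. k < k' \<longrightarrow> k' \<le> l \<longrightarrow> (\<forall>a'. (k', a') \<notin> F)"
    and c: "(\<Sum>p\<in>A. wt D (fst p)) + wt D l \<le> 1"
  shows "kinv D ((F - {(k, a)}) \<union> newb D k a l) (insert (l, a * D ^ (l - k)) A)"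
    and "(l, a * D ^ (l - k)) \<notin> A" and "newb D k a l \<inter> F = {}"
proof -
  define m where "m = l - k"
  have lkm: "l = k + m" using kl m_def by simp
  define g where "g = (\<lambda>(mm, u). (k + mm, a * D ^ mm + u))"
  define X where "X = {(j + 1, t + 1) | j t. j < m \<and> t < D - 1}"
  have D0: "0 < D" using D by simp
  have N: "newb D k a l = g ` X"
    unfolding newb_def g_def X_def m_def by (auto simp: image_iff)
  have al: "(l, a * D ^ (l - k)) = g (m, 0)" unfolding g_def m_def using kl by simp
  have "\<forall>p\<in>F \<union> A. snd p < D ^ fst p" using inv by (simp add: kinv_def)
  from bspec[OF this UnI1[OF kaF]] have aD: "a < D ^ k" by simp
  have Xu: "\<And>mm u. (mm, u) \<in> insert (m, 0) X \<Longrightarrow> u < D ^ mm \<and> mm \<le> m \<and> (u = 0 \<longrightarrow> mm = m) \<and> u < D"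
  proof -
    fix mm u assume "(mm, u) \<in> insert (m, 0) X"
    then show "u < D ^ mm \<and> mm \<le> m \<and> (u = 0 \<longrightarrow> mm = m) \<and> u < D"
    proof
      assume "(mm, u) = (m, 0)" then show ?thesis using D0 by simp
    next
      assume "(mm, u) \<in> X"
      then obtain j t where jt: "mm = j + 1" "u = t + 1" "j < m" "t < D - 1" unfolding X_def by auto
      have "D ^ 1 \<le> D ^ mm" using D jt by (intro power_increasing) auto
      then have p: "D \<le> D ^ mm" by simp
      have uD: "u < D" using jt by simp
      have "u < D ^ mm" using uD p by (rule less_le_trans)
      then show ?thesis using jt uD by auto
    qed
  qed
  have g_valid: "\<And>x. x \<in> insert (m, 0) X \<Longrightarrow> snd (g x) < D ^ fst (g x)"
  proof -
    fix x assume x: "x \<in> insert (m, 0) X"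
    obtain mm u where xe: "x = (mm, u)" by (cases x)
    have u: "u < D ^ mm" using Xu x xe by blast
    have "a * D ^ mm + u < (a + 1) * D ^ mm" using u by simp
    also have "\<dots> \<le> D ^ k * D ^ mm" using aD by (intro mult_right_mono) auto
    finally show "snd (g x) < D ^ fst (g x)" unfolding g_def xe by (simp add: power_add)
  qed
  have g_anc: "\<And>x. x \<in> insert (m, 0) X \<Longrightarrow> anc D (k, a) (g x)"
  proof -
    fix x assume x: "x \<in> insert (m, 0) X"
    obtain mm u where xe: "x = (mm, u)" by (cases x)
    have u: "u < D ^ mm" using Xu x xe by blast
    show "anc D (k, a) (g x)" unfolding g_def xe using anc_desc[OF u, of k a] by simp
  qed
  have g_disj: "\<And>x y. x \<in> insert (m, 0) X \<Longrightarrow> y \<in> insert (m, 0) X \<Longrightarrow> x \<noteq> y \<Longrightarrow> \<not> anc D (g x) (g y)"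
  proof
    fix x y assume x: "x \<in> insert (m, 0) X" and y: "y \<in> insert (m, 0) X" and xy: "x \<noteq> y"
      and an: "anc D (g x) (g y)"
    obtain mm u where xe: "x = (mm, u)" by (cases x)
    obtain mm' u' where ye: "y = (mm', u')" by (cases y)
    have h: "mm \<le> mm' \<and> u' div D ^ (mm' - mm) = u"
      using anc_g[OF D0] an unfolding g_def xe ye by simp
    show False
    proof (cases "mm = mm'")
      case True then show False using h xy xe ye by simp
    next
      case False
      then have "mm < mm'" using h by simp
      then have "D ^ 1 \<le> D ^ (mm' - mm)" using D by (intro power_increasing) auto
      moreover have "u' < D" using Xu y ye by blast
      ultimately have "u = 0" using h by simp
      then have "mm = m" using Xu x xe by blast
      moreover have "mm' \<le> m" using Xu y ye by blast
      ultimately show False using \<open>mm < mm'\<close> by simp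
    qed
  qed
  have g_inj: "inj_on g (insert (m, 0) X)"
  proof (rule inj_onI)
    fix x y assume "x \<in> insert (m, 0) X" "y \<in> insert (m, 0) X" "g x = g y"
    then show "x = y" using g_disj[of x y] unfolding anc_def by fastforce
  qed
  define Old where "Old = (F - {(k, a)}) \<union> A"
  have O_ne: "\<And>q. q \<in> Old \<Longrightarrow> q \<noteq> (k, a)" using inv kaF unfolding Old_def kinv_def by auto
  have O_disj: "\<And>q x. q \<in> Old \<Longrightarrow> x \<in> insert (m, 0) X \<Longrightarrow> disj D q (g x)"
  proof -
    fix q x assume q: "q \<in> Old" and x: "x \<in> insert (m, 0) X"
    have "disj D q (k, a)" using inv q kaF O_ne[OF q] unfolding kinv_def Old_def by auto
    then show "disj D q (g x)" using disj_desc g_anc[OF x] by blast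
  qed
  have gO: "\<And>x. x \<in> insert (m, 0) X \<Longrightarrow> g x \<notin> Old"
    using O_disj not_disj_self by blast
  have NF: "g ` X \<inter> F = {}"
  proof (rule ccontr)
    assume "g ` X \<inter> F \<noteq> {}"
    then obtain x where x: "x \<in> X" "g x \<in> F" by auto
    obtain mm u where xe: "x = (mm, u)" by (cases x)
    have "1 \<le> mm" "mm \<le> m" using x(1) xe unfolding X_def by auto
    then show False using gap x(2) unfolding g_def xe lkm by auto
  qed
  show "newb D k a l \<inter> F = {}" using NF N by simp
  show alA: "(l, a * D ^ (l - k)) \<notin> A" using gO[of "(m, 0)"] al unfolding Old_def by auto
  define F' where "F' = (F - {(k, a)}) \<union> g ` X"
  define A' where "A' = insert (g (m, 0)) A"
  have finF: "finite F" and finA: "finite A" using inv unfolding kinv_def by auto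
  have X_img: "X = (\<lambda>(j, t). (j + 1, t + 1)) ` ({..<m} \<times> {..<D - 1})" unfolding X_def by auto
  have finX: "finite X" unfolding X_img by simp
  have union: "F' \<union> A' = Old \<union> g ` insert (m, 0) X" unfolding F'_def A'_def Old_def by auto
  have v: "\<forall>p\<in>F' \<union> A'. snd p < D ^ fst p"
    using inv g_valid unfolding union Old_def kinv_def by auto
  have m0X: "(m, 0) \<notin> X" unfolding X_def by auto
  have dj: "F' \<inter> A' = {}"
    using inv gO g_inj m0X unfolding F'_def A'_def Old_def kinv_def by (auto simp: inj_on_def)
  have pw: "\<forall>p\<in>F' \<union> A'. \<forall>q\<in>F' \<union> A'. p \<noteq> q \<longrightarrow> disj D p q"
  proof (intro ballI impI)
    fix p q assume p: "p \<in> F' \<union> A'" and q: "q \<in> F' \<union> A'" and pq: "p \<noteq> q"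
    show "disj D p q"
    proof (cases "p \<in> Old")
      case pO: True
      show ?thesis
      proof (cases "q \<in> Old")
        case True then show ?thesis using inv pO pq unfolding kinv_def Old_def by auto
      next
        case False then obtain y where "y \<in> insert (m, 0) X" "q = g y" using q union by auto
        then show ?thesis using O_disj pO by blast
      qed
    next
      case pO: False
      then obtain x where x: "x \<in> insert (m, 0) X" "p = g x" using p union by auto
      show ?thesis
      proof (cases "q \<in> Old")
        case True then show ?thesis using O_disj x disj_sym by metis
      next
        case False then obtain y where y: "y \<in> insert (m, 0) X" "q = g y" using q union by auto
        then have "x \<noteq> y" using pq x by auto
        then show ?thesis unfolding disj_def using g_disj x y by metis
      qed
    qed
  qed
  have cardl: "\<forall>k0. card {b. (k0, b) \<in> F'} \<le> D - 1"
  proof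
    fix k0
    show "card {b. (k0, b) \<in> F'} \<le> D - 1"
    proof (cases "k < k0 \<and> k0 \<le> l")
      case True
      have "{b. (k0, b) \<in> F'} \<subseteq> (\<lambda>t. a * D ^ (k0 - k) + (t + 1)) ` {..<D - 1}"
      proof
        fix b assume "b \<in> {b. (k0, b) \<in> F'}"
        then have "(k0, b) \<in> g ` X" using gap True unfolding F'_def by auto
        then show "b \<in> (\<lambda>t. a * D ^ (k0 - k) + (t + 1)) ` {..<D - 1}"
          unfolding g_def X_def by force
      qed
      then have "card {b. (k0, b) \<in> F'} \<le> card ((\<lambda>t. a * D ^ (k0 - k) + (t + 1)) ` {..<D - 1})"
        by (intro card_mono) auto
      also have "\<dots> \<le> D - 1" using card_image_le[of "{..<D - 1}"] by simp
      finally show ?thesis .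
    next
      case False
      have "{b. (k0, b) \<in> F'} \<subseteq> {b. (k0, b) \<in> F}"
      proof
        fix b assume "b \<in> {b. (k0, b) \<in> F'}"
        moreover have "(k0, b) \<notin> g ` X"
        proof
          assume "(k0, b) \<in> g ` X"
          then obtain j t where "k0 = k + (j + 1)" "j < m" unfolding g_def X_def by auto
          then show False using False lkm by simp
        qed
        ultimately show "b \<in> {b. (k0, b) \<in> F}" unfolding F'_def by auto
      qed
      moreover have "finite {b. (k0, b) \<in> F}"
        using finite_subset[of "{b. (k0, b) \<in> F}" "snd ` F"] finF by force
      ultimately have "card {b. (k0, b) \<in> F'} \<le> card {b. (k0, b) \<in> F}" by (rule card_mono[rotated])
      also have "\<dots> \<le> D - 1" using inv unfolding kinv_def by auto
      finally show ?thesis .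
    qed
  qed
  have sumN: "(\<Sum>p\<in>g ` X. wt D (fst p)) = (\<Sum>j<m. (real D - 1) * wt D (k + 1 + j))"
  proof -
    have "(\<Sum>p\<in>g ` X. wt D (fst p)) = (\<Sum>x\<in>X. wt D (fst (g x)))"
      using g_inj by (intro sum.reindex_cong[where l=g]) (auto intro: inj_on_subset)
    also have "\<dots> = (\<Sum>x\<in>(\<lambda>(j, t). (j + 1, t + 1)) ` ({..<m} \<times> {..<D - 1}). wt D (k + fst x))"
      unfolding X_img g_def by (intro sum.cong) (auto simp: case_prod_beta)
    also have "\<dots> = (\<Sum>x\<in>{..<m} \<times> {..<D - 1}. wt D (k + 1 + fst x))"
      by (subst sum.reindex) (auto simp: inj_on_def intro!: sum.cong)
    also have "\<dots> = (\<Sum>(j, t)\<in>{..<m} \<times> {..<D - 1}. wt D (k + 1 + j))"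
      by (simp add: case_prod_beta)
    also have "\<dots> = (\<Sum>j<m. \<Sum>t<D - 1. wt D (k + 1 + j))"
      by (rule sum.cartesian_product[symmetric])
    also have "\<dots> = (\<Sum>j<m. (real D - 1) * wt D (k + 1 + j))"
      using D by (simp add: of_nat_diff)
    finally show ?thesis .
  qed
  have sumF': "(\<Sum>p\<in>F'. wt D (fst p)) = (\<Sum>p\<in>F. wt D (fst p)) - wt D k + (\<Sum>p\<in>g ` X. wt D (fst p))"
  proof -
    have "(\<Sum>p\<in>F'. wt D (fst p)) = (\<Sum>p\<in>F - {(k, a)}. wt D (fst p)) + (\<Sum>p\<in>g ` X. wt D (fst p))"
      unfolding F'_def using NF finF finX by (intro sum.union_disjoint) auto
    moreover have "(\<Sum>p\<in>F - {(k, a)}. wt D (fst p)) = (\<Sum>p\<in>F. wt D (fst p)) - wt D k"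
      using kaF finF by (simp add: sum_diff1)
    ultimately show ?thesis by simp
  qed
  have sumA': "(\<Sum>p\<in>A'. wt D (fst p)) = (\<Sum>p\<in>A. wt D (fst p)) + wt D l"
    unfolding A'_def using finA alA al by (simp add: g_def lkm)
  have tot: "(\<Sum>p\<in>F'. wt D (fst p)) + (\<Sum>p\<in>A'. wt D (fst p)) = 1"
    using inv geo[OF D0, where m=m and k=k] sumN sumF' sumA' lkm unfolding kinv_def by simp
  have "kinv D F' A'"
    unfolding kinv_def using finF finA finX v dj pw cardl tot unfolding F'_def A'_def by auto
  then show "kinv D ((F - {(k, a)}) \<union> newb D k a l) (insert (l, a * D ^ (l - k)) A)"
    unfolding F'_def A'_def N al .
qed


lemma set_encode_union: "finite Y \<Longrightarrow> finite Z \<Longrightarrow> Y \<inter> Z = {} \<Longrightarrow> set_encode (Y \<union> Z) = set_encode Y + set_encode Z"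
  unfolding set_encode_def by (rule sum.union_disjoint)

lemma kstep_set:
  assumes ka: "(k, a) \<in> Fp S" and NF: "newb D k a l \<inter> Fp S = {}"
  shows "Fp (S - 2 ^ prod_encode (k, a) + (\<Sum>j<l - k. \<Sum>t<D - 1. 2 ^ prod_encode (k + 1 + j, a * D ^ (j + 1) + (t + 1))))
    = (Fp S - {(k, a)}) \<union> newb D k a l"
proof -
  have inj: "inj prod_encode" by (simp add: inj_on_def)
  have S: "S = set_encode (prod_encode ` Fp S)"
    using set_decode_inverse[of S] set_decode_Fp[of S] by simp
  have ins: "prod_encode ` Fp S = insert (prod_encode (k, a)) (prod_encode ` (Fp S - {(k, a)}))"
    using ka by auto
  have nin: "prod_encode (k, a) \<notin> prod_encode ` (Fp S - {(k, a)})" by auto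
  have S2: "S - 2 ^ prod_encode (k, a) = set_encode (prod_encode ` (Fp S - {(k, a)}))"
    using S ins nin by simp
  define h where "h = (\<lambda>(j, t). (k + 1 + j, a * D ^ (j + 1) + (t + 1)))"
  have hinj: "inj_on h ({..<l - k} \<times> {..<D - 1})" unfolding h_def by (auto simp: inj_on_def)
  have "(\<Sum>j<l - k. \<Sum>t<D - 1. 2 ^ prod_encode (k + 1 + j, a * D ^ (j + 1) + (t + 1)))
      = (\<Sum>x\<in>{..<l - k} \<times> {..<D - 1}. 2 ^ prod_encode (h x))"
    unfolding h_def by (simp add: sum.cartesian_product case_prod_beta)
  also have "\<dots> = (\<Sum>p\<in>newb D k a l. 2 ^ prod_encode p)"
    unfolding newb_def h_def[symmetric] using hinj by (simp add: sum.reindex)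
  also have "\<dots> = set_encode (prod_encode ` newb D k a l)"
    unfolding set_encode_def by (simp add: sum.reindex inj_on_def)
  finally have S3: "(\<Sum>j<l - k. \<Sum>t<D - 1. 2 ^ prod_encode (k + 1 + j, a * D ^ (j + 1) + (t + 1)))
      = set_encode (prod_encode ` newb D k a l)" .
  have finN: "finite (newb D k a l)" unfolding newb_def by simp
  have dis: "prod_encode ` (Fp S - {(k, a)}) \<inter> prod_encode ` newb D k a l = {}" using NF by auto
  have "S - 2 ^ prod_encode (k, a) + (\<Sum>j<l - k. \<Sum>t<D - 1. 2 ^ prod_encode (k + 1 + j, a * D ^ (j + 1) + (t + 1)))
     = set_encode (prod_encode ` ((Fp S - {(k, a)}) \<union> newb D k a l))"
    unfolding S2 S3 image_Un using finN dis by (simp add: set_encode_union)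
  then show ?thesis using finN by (simp add: Fp_encode)
qed

lemma sel:
  assumes D: "2 \<le> D" and inv: "kinv D (Fp S) A" and c: "(\<Sum>p\<in>A. wt D (fst p)) + wt D l \<le> 1"
  shows "(klev D S l, aidx D S (klev D S l)) \<in> Fp S" and "klev D S l \<le> l"
    and "\<forall>k'. klev D S l < k' \<longrightarrow> k' \<le> l \<longrightarrow> (\<forall>a'. (k', a') \<notin> Fp S)"
proof -
  have val: "\<forall>p\<in>Fp S. snd p < D ^ fst p" using inv unfolding kinv_def by auto
  obtain p where p: "p \<in> Fp S" "fst p \<le> l" using exists_low[OF D inv c] by blast
  have ex: "\<exists>j<Suc l. exlev D S (l - j)"
  proof (intro exI conjI)
    show "l - fst p < Suc l" by simp
    have "fst p = l - (l - fst p)" using p by simp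
    then show "exlev D S (l - (l - fst p))" unfolding exlev_def using p val
      by (metis prod.collapse)
  qed
  define J where "J = (LEAST j. exlev D S (l - j))"
  have kJ: "klev D S l = l - J" unfolding klev_def J_def bmin_spec using ex by simp
  have exJ: "exlev D S (l - J)" unfolding J_def using ex by (auto intro: LeastI_ex)
  show "klev D S l \<le> l" using kJ by simp
  show "\<forall>k'. klev D S l < k' \<longrightarrow> k' \<le> l \<longrightarrow> (\<forall>a'. (k', a') \<notin> Fp S)"
  proof (intro allI impI)
    fix k' a' assume k1: "klev D S l < k'" and k2: "k' \<le> l"
    have "l - k' < J" using k1 k2 kJ by simp
    then have "\<not> exlev D S (l - (l - k'))" unfolding J_def by (rule not_less_Least)
    then have ne: "\<not> exlev D S k'" using k2 by simp
    show "(k', a') \<notin> Fp S"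
    proof
      assume "(k', a') \<in> Fp S"
      then show False using ne val unfolding exlev_def by fastforce
    qed
  qed
  have exa: "\<exists>a<D ^ klev D S l. (klev D S l, a) \<in> Fp S" using exJ kJ unfolding exlev_def by simp
  then show "(klev D S l, aidx D S (klev D S l)) \<in> Fp S"
    unfolding aidx_def bmin_spec by (auto intro: LeastI_ex)
qed

definition runS :: "nat \<Rightarrow> (nat \<Rightarrow> bool) \<Rightarrow> (nat \<Rightarrow> nat) \<Rightarrow> nat \<Rightarrow> nat" where
  "runS D q lv s = rec_nat 1 (\<lambda>t S. if q t then kstep D S (lv t) else S) s"

definition allocS :: "nat \<Rightarrow> (nat \<Rightarrow> bool) \<Rightarrow> (nat \<Rightarrow> nat) \<Rightarrow> nat \<Rightarrow> nat \<times> nat" where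
  "allocS D q lv t = (lv t, allocv D (runS D q lv t) (lv t))"

lemma Fp_1: "Fp 1 = {(0, 0)}"
proof -
  have "Fp (set_encode (prod_encode ` {(0, 0)})) = {(0, 0)}" by (rule Fp_encode) simp
  moreover have "set_encode (prod_encode ` {(0::nat, 0::nat)}) = 1" by (simp add: prod_encode_def)
  ultimately show ?thesis by simp
qed

lemma run_inv:
  assumes D: "2 \<le> D" and c: "\<forall>s. (\<Sum>t\<in>{t. t \<le> s \<and> q t}. wt D (lv t)) \<le> 1"
  shows "kinv D (Fp (runS D q lv s)) (allocS D q lv ` {t. t < s \<and> q t}) \<and>
         inj_on (allocS D q lv) {t. t < s \<and> q t}"
proof (induct s)
  case 0
  have "card {a. (k, a) \<in> {(0::nat, 0::nat)}} \<le> D - 1" for k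
  proof -
    have "{a. (k, a) \<in> {(0::nat, 0::nat)}} \<subseteq> {0}" by auto
    then have "card {a. (k, a) \<in> {(0::nat, 0::nat)}} \<le> 1" using card_mono[of "{0::nat}"] by fastforce
    then show ?thesis using D by simp
  qed
  moreover have "Fp (Suc 0) = {(0, 0)}" using Fp_1 by simp
  ultimately show ?case unfolding kinv_def using D by (simp add: runS_def wt_def)
next
  case (Suc s)
  let ?A = "allocS D q lv ` {t. t < s \<and> q t}"
  show ?case
  proof (cases "q s")
    case False
    have "{t. t < Suc s \<and> q t} = {t. t < s \<and> q t}" using False less_Suc_eq by auto
    moreover have "runS D q lv (Suc s) = runS D q lv s" using False by (simp add: runS_def)
    ultimately show ?thesis using Suc by simp
  next
    case True
    define S where "S = runS D q lv s"
    define l where "l = lv s"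
    have inv: "kinv D (Fp S) ?A" and inj: "inj_on (allocS D q lv) {t. t < s \<and> q t}"
      using Suc unfolding S_def by auto
    have finA: "finite {t. t < s \<and> q t}" by simp
    have sumA: "(\<Sum>p\<in>?A. wt D (fst p)) = (\<Sum>t\<in>{t. t < s \<and> q t}. wt D (lv t))"
    proof -
      have "(\<Sum>p\<in>?A. wt D (fst p)) = (\<Sum>t\<in>{t. t < s \<and> q t}. wt D (fst (allocS D q lv t)))"
        using sum.reindex[OF inj, of "\<lambda>p. wt D (fst p)"] by (simp add: comp_def)
      then show ?thesis by (simp add: allocS_def)
    qed
    have eqs: "{t. t \<le> s \<and> q t} = insert s {t. t < s \<and> q t}" using True by auto
    have cc: "(\<Sum>p\<in>?A. wt D (fst p)) + wt D l \<le> 1"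
      using c[rule_format, of s] unfolding sumA eqs l_def using finA by (simp add: add.commute)
    define k where "k = klev D S l"
    define a where "a = aidx D S k"
    have s1: "(k, a) \<in> Fp S" "k \<le> l" "\<forall>k'. k < k' \<longrightarrow> k' \<le> l \<longrightarrow> (\<forall>a'. (k', a') \<notin> Fp S)"
      using sel[OF D inv cc] unfolding k_def a_def by auto
    note core = kstep_core[OF D inv s1 cc]
    have run: "runS D q lv (Suc s) = kstep D S l" using True by (simp add: runS_def S_def l_def)
    have Fk: "Fp (kstep D S l) = (Fp S - {(k, a)}) \<union> newb D k a l"
      unfolding kstep_def Let_def k_def[symmetric] a_def[symmetric] using s1(1) core(3)
      by (rule kstep_set)
    have al: "allocS D q lv s = (l, a * D ^ (l - k))"
      unfolding allocS_def allocv_def S_def[symmetric] l_def[symmetric] k_def[symmetric] a_def[symmetric] by simp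
    have eqA: "{t. t < Suc s \<and> q t} = insert s {t. t < s \<and> q t}" using True less_Suc_eq by auto
    have "kinv D (Fp (runS D q lv (Suc s))) (allocS D q lv ` {t. t < Suc s \<and> q t})"
      unfolding run Fk eqA image_insert al using core(1) .
    moreover have "inj_on (allocS D q lv) {t. t < Suc s \<and> q t}"
      unfolding eqA using inj core(2) al by simp
    ultimately show ?thesis ..
  qed
qed

lemma run_disj:
  assumes D: "2 \<le> D" and c: "\<forall>s. (\<Sum>t\<in>{t. t \<le> s \<and> q t}. wt D (lv t)) \<le> 1"
    and q1: "q t1" and q2: "q t2" and ne: "t1 \<noteq> t2"
  shows "disj D (allocS D q lv t1) (allocS D q lv t2)"
proof -
  define s where "s = Suc (max t1 t2)"
  note r = run_inv[OF D c, of s]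
  have in1: "t1 \<in> {t. t < s \<and> q t}" and in2: "t2 \<in> {t. t < s \<and> q t}" using q1 q2 unfolding s_def by auto
  have "allocS D q lv t1 \<noteq> allocS D q lv t2" using r ne in1 in2 by (auto dest: inj_onD)
  then show ?thesis using r in1 in2 unfolding kinv_def by blast
qed

lemma run_valid:
  assumes D: "2 \<le> D" and c: "\<forall>s. (\<Sum>t\<in>{t. t \<le> s \<and> q t}. wt D (lv t)) \<le> 1" and q1: "q t1"
  shows "snd (allocS D q lv t1) < D ^ fst (allocS D q lv t1)"
proof -
  note r = run_inv[OF D c, of "Suc t1"]
  have "allocS D q lv t1 \<in> allocS D q lv ` {t. t < Suc t1 \<and> q t}" using q1 by auto
  then show ?thesis using r unfolding kinv_def by blast
qed





lemma nth_Cons_1[simp]: "(a # xs) ! 1 = xs ! 0" by simp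

lemma TP_ext: "TP n P \<Longrightarrow> (\<And>xs. length xs = n \<Longrightarrow> Q xs = P xs) \<Longrightarrow> TP n Q"
  unfolding TP_def by (erule T_ext) simp

lemma TP_lift2: assumes "TP 2 (\<lambda>xs. P (xs ! 0) (xs ! 1))" "T n f" "T n g" shows "TP n (\<lambda>xs. P (f xs) (g xs))"
  using T_lift2[OF assms(1)[unfolded TP_def] assms(2,3)] unfolding TP_def .

lemma TP_lift1: assumes "TP 1 (\<lambda>xs. P (xs ! 0))" "T n f" shows "TP n (\<lambda>xs. P (f xs))"
  using T_lift1[OF assms(1)[unfolded TP_def] assms(2)] unfolding TP_def .

lemma TP_Fp[intro]: "T n f \<Longrightarrow> T n g \<Longrightarrow> T n h \<Longrightarrow> TP n (\<lambda>xs. (g xs, h xs) \<in> Fp (f xs))"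
  unfolding Fp_def by (simp add: TP_memb T_pe)

lemma T2_exlev: "TP 2 (\<lambda>xs. exlev D (xs ! 0) (xs ! 1))"
proof -
  have P: "TP (Suc 2) (\<lambda>ys. (ys ! 2, ys ! 0) \<in> Fp (ys ! 1))"
    by (rule TP_Fp; rule T_proj'; simp)
  have "TP 2 (\<lambda>xs. \<exists>j<D ^ (xs ! 1). ((j # xs) ! 2, (j # xs) ! 0) \<in> Fp ((j # xs) ! 1))"
    by (rule TP_bex[OF P]) (rule T_pow; rule T_const T_proj'; simp)
  then show ?thesis by (rule TP_ext) (simp add: exlev_def)
qed

lemma T2_klev: "T 2 (\<lambda>xs. klev D (xs ! 0) (xs ! 1))"
proof -
  have P: "TP (Suc 2) (\<lambda>ys. exlev D (ys ! 1) (ys ! 2 - ys ! 0))"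
    by (rule TP_lift2[OF T2_exlev]; (rule T_sub)?; rule T_proj'; simp)
  have "T 2 (\<lambda>xs. xs ! 1 - bmin (Suc (xs ! 1)) (\<lambda>j. exlev D ((j # xs) ! 1) ((j # xs) ! 2 - (j # xs) ! 0)))"
    apply (rule T_sub) apply (rule T_proj', simp)
    apply (rule T_bmin[OF P]) apply (rule T_Suc, rule T_proj', simp)
    done
  then show ?thesis by (rule T_ext) (simp add: klev_def)
qed

lemma T2_aidx: "T 2 (\<lambda>xs. aidx D (xs ! 0) (xs ! 1))"
proof -
  have P: "TP (Suc 2) (\<lambda>ys. (ys ! 2, ys ! 0) \<in> Fp (ys ! 1))"
    by (rule TP_Fp; rule T_proj'; simp)
  have "T 2 (\<lambda>xs. bmin (D ^ (xs ! 1)) (\<lambda>j. ((j # xs) ! 2, (j # xs) ! 0) \<in> Fp ((j # xs) ! 1)))"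
    by (rule T_bmin[OF P]) (rule T_pow; rule T_const T_proj'; simp)
  then show ?thesis by (rule T_ext) (simp add: aidx_def)
qed

lemma T_klev[intro]: "T n f \<Longrightarrow> T n g \<Longrightarrow> T n (\<lambda>xs. klev D (f xs) (g xs))"
  by (rule T_lift2[OF T2_klev])
lemma T_aidx[intro]: "T n f \<Longrightarrow> T n g \<Longrightarrow> T n (\<lambda>xs. aidx D (f xs) (g xs))"
  by (rule T_lift2[OF T2_aidx])

lemma T2_kstep: "T 2 (\<lambda>xs. kstep D (xs ! 0) (xs ! 1))"
proof -
  define K where "K = (\<lambda>xs::nat list. klev D (xs ! 0) (xs ! 1))"
  define A where "A = (\<lambda>xs::nat list. aidx D (xs ! 0) (K xs))"
  have TK: "T 2 K" unfolding K_def by (rule T_klev; rule T_proj'; simp)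
  have TA: "T 2 A" unfolding A_def by (rule T_aidx; (rule T_proj', simp)?; rule TK)
  have inner: "T (Suc (Suc 2)) (\<lambda>ys. 2 ^ prod_encode (K (tl (tl ys)) + 1 + ys ! 1,
          A (tl (tl ys)) * D ^ (ys ! 1 + 1) + (ys ! 0 + 1)))"
    apply (rule T_pow, rule T_const, rule T_pe)
     apply (rule T_add, rule T_add, rule T_tl, rule T_tl, rule TK, rule T_const, rule T_proj', simp)
    apply (rule T_add, rule T_mult, rule T_tl, rule T_tl, rule TA, rule T_pow, rule T_const)
     apply (rule T_add, rule T_proj', simp, rule T_const)
    apply (rule T_add, rule T_proj', simp, rule T_const)
    done
  have mid: "T (Suc 2) (\<lambda>zs. \<Sum>t<D - 1. (\<lambda>ys. 2 ^ prod_encode (K (tl (tl ys)) + 1 + ys ! 1,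
          A (tl (tl ys)) * D ^ (ys ! 1 + 1) + (ys ! 0 + 1))) (t # zs))"
    by (rule T_sum[OF inner T_const])
  have "T 2 (\<lambda>xs. xs ! 0 - 2 ^ prod_encode (K xs, A xs) +
     (\<Sum>j<xs ! 1 - K xs. (\<lambda>zs. \<Sum>t<D - 1. (\<lambda>ys. 2 ^ prod_encode (K (tl (tl ys)) + 1 + ys ! 1,
          A (tl (tl ys)) * D ^ (ys ! 1 + 1) + (ys ! 0 + 1))) (t # zs)) (j # xs)))"
    apply (rule T_add, rule T_sub, rule T_proj', simp, rule T_pow, rule T_const, rule T_pe, rule TK, rule TA)
    apply (rule T_sum[OF mid], rule T_sub, rule T_proj', simp, rule TK)
    done
  then show ?thesis by (rule T_ext) (simp add: kstep_def Let_def K_def A_def)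
qed

lemma T_kstep[intro]: "T n f \<Longrightarrow> T n g \<Longrightarrow> T n (\<lambda>xs. kstep D (f xs) (g xs))"
  by (rule T_lift2[OF T2_kstep])

lemma T_allocv[intro]: "T n f \<Longrightarrow> T n g \<Longrightarrow> T n (\<lambda>xs. allocv D (f xs) (g xs))"
  unfolding allocv_def by (intro T_mult T_aidx T_klev T_pow T_const T_sub)

lemma T_runS:
  assumes Q: "TP 2 (\<lambda>xs. Q (xs ! 0) (xs ! 1))" and L: "T 1 (\<lambda>xs. LV (xs ! 0))"
  shows "T 2 (\<lambda>xs. runS D (Q (xs ! 0)) LV (xs ! 1))"
proof -
  have "T 2 (\<lambda>xs. rec_nat 1 (\<lambda>y r. (\<lambda>ys. if Q (ys ! 2) (ys ! 0) then kstep D (ys ! 1) (LV (ys ! 0)) else ys ! 1) (y # r # xs)) (xs ! 1))"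
    apply (rule T_rec)
      apply (rule T_proj', simp)
     apply (rule T_const)
    apply (rule T_if)
      apply (rule TP_lift2[OF Q]; rule T_proj'; simp)
     apply (rule T_kstep, rule T_proj', simp, rule T_lift1[OF L], rule T_proj', simp)
    apply (rule T_proj', simp)
    done
  then show ?thesis by (rule T_ext) (simp add: runS_def, rule rec_nat_fcong, simp)
qed





lemma sym_set_finite: "finite {b::'a::countable. to_nat b < n}"
proof -
  have "to_nat ` {b::'a. to_nat b < n} \<subseteq> {..<n}" by auto
  then have "finite (to_nat ` {b::'a. to_nat b < n})" by (rule finite_subset) simp
  then show ?thesis by (rule finite_imageD) (simp add: inj_on_def)
qed

lemma sym_code_mono: "to_nat (a::'a::countable) < to_nat (a'::'a) \<Longrightarrow> sym_code a < sym_code a'"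
proof -
  assume a: "to_nat (a::'a::countable) < to_nat (a'::'a)"
  have "{b::'a. to_nat b < to_nat a} \<subset> {b::'a. to_nat b < to_nat a'}" using a by auto
  then show ?thesis unfolding sym_code_def by (rule psubset_card_mono[OF sym_set_finite])
qed

lemma sym_code_inj: "inj (sym_code :: 'a::countable \<Rightarrow> nat)"
proof (rule injI)
  fix a b :: 'a assume e: "sym_code a = sym_code b"
  show "a = b"
  proof (rule ccontr)
    assume "a \<noteq> b"
    then have "to_nat a \<noteq> to_nat b" by simp
    then have "to_nat a < to_nat b \<or> to_nat b < to_nat a" by arith
    then show False using sym_code_mono[of a b] sym_code_mono[of b a] e by auto
  qed
qed

lemma sym_code_down: "sym_code (a::'a::countable) = Suc m \<Longrightarrow> \<exists>b::'a. sym_code b = m"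
proof -
  assume sa: "sym_code a = Suc m"
  define X where "X = {b::'a. to_nat b < to_nat a}"
  have finX: "finite X" unfolding X_def by (rule sym_set_finite)
  have cX: "card X = Suc m" using sa unfolding sym_code_def X_def .
  then have "X \<noteq> {}" by auto
  define M where "M = Max (to_nat ` X)"
  have "M \<in> to_nat ` X" unfolding M_def using finX \<open>X \<noteq> {}\<close> by simp
  then obtain b where b: "b \<in> X" "to_nat b = M" by auto
  have "{c. to_nat c < to_nat b} = X - {b}"
  proof
    show "{c. to_nat c < to_nat b} \<subseteq> X - {b}" using b unfolding X_def by auto
    show "X - {b} \<subseteq> {c. to_nat c < to_nat b}"
    proof
      fix c assume c: "c \<in> X - {b}"
      then have "to_nat c \<le> M" unfolding M_def using finX by simp
      moreover have "to_nat c \<noteq> to_nat b" using c by auto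
      ultimately show "c \<in> {c. to_nat c < to_nat b}" using b by auto
    qed
  qed
  then have "sym_code b = card (X - {b})" unfolding sym_code_def by simp
  also have "\<dots> = m" using cX b finX by simp
  finally show ?thesis by blast
qed

lemma sym_code_downclosed: "m < sym_code (a::'a::countable) \<Longrightarrow> \<exists>b::'a. sym_code b = m"
proof (induct "sym_code a" arbitrary: a m)
  case 0 then show ?case by simp
next
  case (Suc n)
  obtain b :: 'a where b: "sym_code b = n" using sym_code_down[of a n] Suc.hyps(2) by metis
  show ?case
  proof (cases "m = n")
    case True then show ?thesis using b by blast
  next
    case False then have "m < sym_code b" using Suc.prems Suc.hyps(2) b by simp
    then show ?thesis using Suc.hyps(1)[of b m] b by simp
  qed
qed

lemma range_sym_code_finite:
  assumes "finite (UNIV :: 'a::countable set)"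
  shows "range (sym_code :: 'a \<Rightarrow> nat) = {..<card (UNIV :: 'a set)}"
proof (rule card_subset_eq)
  show "finite {..<card (UNIV :: 'a set)}" by simp
  show "range (sym_code :: 'a \<Rightarrow> nat) \<subseteq> {..<card (UNIV :: 'a set)}"
  proof
    fix n assume "n \<in> range (sym_code :: 'a \<Rightarrow> nat)"
    then obtain a :: 'a where a: "n = sym_code a" by auto
    have "{b::'a. to_nat b < to_nat a} \<subset> UNIV" by auto
    then have "card {b::'a. to_nat b < to_nat a} < card (UNIV :: 'a set)"
      by (rule psubset_card_mono[OF assms])
    then show "n \<in> {..<card (UNIV :: 'a set)}" using a unfolding sym_code_def by simp
  qed
  show "card (range (sym_code :: 'a \<Rightarrow> nat)) = card {..<card (UNIV :: 'a set)}"
    using card_image[OF sym_code_inj] by simp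
qed

lemma range_sym_code_infinite:
  assumes "infinite (UNIV :: 'a::countable set)"
  shows "range (sym_code :: 'a \<Rightarrow> nat) = UNIV"
proof -
  have inf: "infinite (range (sym_code :: 'a \<Rightarrow> nat))"
    using assms sym_code_inj finite_imageD by blast
  have "m \<in> range (sym_code :: 'a \<Rightarrow> nat)" for m
  proof -
    obtain r where r: "r \<in> range (sym_code :: 'a \<Rightarrow> nat)" "m < r"
      using inf by (meson finite_nat_set_iff_bounded_le not_le)
    then obtain a :: 'a where "r = sym_code a" by auto
    then show ?thesis using sym_code_downclosed[of m a] r by auto
  qed
  then show ?thesis by auto
qed

lemma TP_range_sym: "TP n (\<lambda>xs. f xs \<in> range (sym_code :: 'a::countable \<Rightarrow> nat))" if "T n f"
proof (cases "finite (UNIV :: 'a set)")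
  case True
  show ?thesis unfolding range_sym_code_finite[OF True] using that by (simp add: TP_less T_const)
next
  case False
  show ?thesis unfolding range_sym_code_infinite[OF False] by simp (rule TP_const)
qed

definition validc :: "'a::countable itself \<Rightarrow> nat \<Rightarrow> bool" where
  "validc _ i \<longleftrightarrow> (\<forall>j<lenc i. nthc i j \<in> range (sym_code :: 'a \<Rightarrow> nat))"

lemma validc_iff: "validc TYPE('a::countable) i \<longleftrightarrow> (\<exists>x::'a list. str_code x = i)"
proof
  assume v: "validc TYPE('a) i"
  define ys where "ys = list_decode i"
  have i: "i = list_encode ys" unfolding ys_def by simp
  have "\<forall>y\<in>set ys. y \<in> range (sym_code :: 'a \<Rightarrow> nat)"
    using v unfolding validc_def i by (auto simp: in_set_conv_nth nthc_le)
  then have "map (sym_code \<circ> inv (sym_code :: 'a \<Rightarrow> nat)) ys = ys"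
    by (intro map_idI) (simp add: f_inv_into_f)
  then show "\<exists>x::'a list. str_code x = i"
    by (intro exI[of _ "map (inv (sym_code :: 'a \<Rightarrow> nat)) ys"]) (simp add: str_code_def i)
next
  assume "\<exists>x::'a list. str_code x = i"
  then obtain x :: "'a list" where "str_code x = i" by blast
  then show "validc TYPE('a) i" unfolding validc_def str_code_def by (auto simp: nthc_le)
qed

lemma TP_validc[intro]: "T n f \<Longrightarrow> TP n (\<lambda>xs. validc TYPE('a::countable) (f xs))"
proof -
  have "TP 1 (\<lambda>xs. \<forall>j<lenc (xs!0). nthc ((j # xs) ! 1) ((j # xs) ! 0) \<in> range (sym_code :: 'a \<Rightarrow> nat))"
    apply (rule TP_ball)
     apply (rule TP_range_sym)
     apply (rule T_nthc; rule T_proj'; simp)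
    apply (rule T_lenc, rule T_proj', simp)
    done
  then have "TP 1 (\<lambda>xs. validc TYPE('a) (xs ! 0))" by (rule TP_ext) (simp add: validc_def)
  then show "T n f \<Longrightarrow> TP n (\<lambda>xs. validc TYPE('a::countable) (f xs))" by (rule TP_lift1)
qed

lemma space_seqspace[simp]: "space seqspace = UNIV"
  by (simp add: seqspace_def space_PiM)

lemma cyl_sets: "cyl x \<in> sets (seqspace :: (nat \<Rightarrow> 'a) measure)"
proof (cases "x = []")
  case True
  then have "cyl x = space (seqspace :: (nat \<Rightarrow> 'a) measure)" by (simp add: cyl_def)
  then show ?thesis using sets.top[of "seqspace :: (nat \<Rightarrow> 'a) measure"] by simp
next
  case False
  have comp: "\<And>i. (\<lambda>\<omega>::nat \<Rightarrow> 'a. \<omega> i) -` {x ! i} \<inter> space seqspace \<in> sets seqspace"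
    unfolding seqspace_def
    by (rule measurable_sets[OF measurable_component_singleton]) auto
  have "cyl x = (\<Inter>i\<in>{..<length x}. (\<lambda>\<omega>::nat \<Rightarrow> 'a. \<omega> i) -` {x ! i} \<inter> space seqspace)"
    unfolding cyl_def by auto
  also have "\<dots> \<in> sets seqspace" using False comp by (intro sets.finite_INT) auto
  finally show ?thesis .
qed

lemma cyl_disjoint: "length x = length y \<Longrightarrow> x \<noteq> y \<Longrightarrow> cyl x \<inter> cyl y = {}"
  unfolding cyl_def by (auto simp: list_eq_iff_nth_eq)

lemma sum_cyl_le1:
  assumes P: "prob_space P" and sP: "sets P = sets seqspace" and fin: "finite X"
    and len: "\<forall>x\<in>X. length x = n"
  shows "(\<Sum>x\<in>X. measure P (cyl x)) \<le> 1"
proof -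
  interpret prob_space P by (rule P)
  have "(\<Sum>x\<in>X. measure P (cyl x)) = measure P (\<Union>x\<in>X. cyl x)"
    using fin len cyl_sets sP
    by (intro measure_finite_Union[symmetric]) (auto simp: disjoint_family_on_def cyl_disjoint)
  also have "\<dots> \<le> 1" by (rule prob_le_1)
  finally show ?thesis .
qed





lemma P_mu: assumes "T (Suc n) p"
  shows "partrec n (\<lambda>xs. if \<exists>y. p (y # xs) = 0 then Some (LEAST y. p (y # xs) = 0) else None)"
proof -
  have "partrec n (mu (\<lambda>ys. Some (p ys)))" using assms unfolding T_def by (rule partrec.minim)
  then show ?thesis by (rule partrec.ext) (simp add: mu_def)
qed

lemma P_comp: assumes h: "T (Suc n) h" and q: "partrec n q"
  shows "partrec n (\<lambda>xs. case q xs of None \<Rightarrow> None | Some v \<Rightarrow> Some (h (v # xs)))"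
proof -
  define fs where "fs = (\<lambda>i::nat. if i = 0 then q else (\<lambda>xs. Some (xs ! (i - 1))))"
  have "partrec n (\<lambda>xs. if \<forall>i<Suc n. fs i xs \<noteq> None then (\<lambda>ys. Some (h ys)) (map (\<lambda>i. the (fs i xs)) [0..<Suc n]) else None)"
  proof (rule partrec.comp)
    show "partrec (Suc n) (\<lambda>ys. Some (h ys))" using h unfolding T_def .
    fix i assume "i < Suc n"
    then show "partrec n (fs i)" unfolding fs_def using q
      by (cases "i = 0") (auto intro: partrec.proj)
  qed
  then show ?thesis
  proof (rule partrec.ext)
    fix xs :: "nat list" assume len: "length xs = n"
    have m: "map (\<lambda>i. the (fs i xs)) [0..<Suc n] = the (q xs) # xs"
      using len by (intro nth_equalityI) (auto simp: fs_def nth_Cons' simp del: upt_Suc)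
    have a: "(\<forall>i<Suc n. fs i xs \<noteq> None) \<longleftrightarrow> q xs \<noteq> None"
      unfolding fs_def by (auto simp del: upt_Suc)
    show "(case q xs of None \<Rightarrow> None | Some v \<Rightarrow> Some (h (v # xs))) =
      (if \<forall>i<Suc n. fs i xs \<noteq> None then (\<lambda>ys. Some (h ys)) (map (\<lambda>i. the (fs i xs)) [0..<Suc n]) else None)"
      unfolding a m by (cases "q xs") auto
  qed
qed

lemma P_oracle: assumes f: "partrec 1 (\<lambda>xs. f (hd xs))" and g: "T n g"
  and def: "\<And>xs. length xs = n \<Longrightarrow> f (g xs) \<noteq> None"
  shows "T n (\<lambda>xs. the (f (g xs)))"
proof -
  have "partrec n (\<lambda>xs. f (g xs))"
    using partrec.comp[OF f, where fs="\<lambda>i xs. Some (g xs)" and n=n] g unfolding T_def by simp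
  then show ?thesis unfolding T_def by (rule partrec.ext) (use def in auto)
qed

lemma T_computable1: "computable1 (\<lambda>k. Some (h k)) \<Longrightarrow> T 1 (\<lambda>xs. h (xs ! 0))"
  unfolding computable1_def T_def by (erule partrec.ext) simp

lemma computable1_P: "partrec 1 F \<Longrightarrow> (\<And>i. F [i] = g i) \<Longrightarrow> computable1 g"
  unfolding computable1_def
  by (erule partrec.ext) (metis One_nat_def length_0_conv length_Suc_conv list.sel(1))

definition Lv :: "nat \<Rightarrow> real \<Rightarrow> nat" where "Lv D p = nat \<lceil>- log (real D) p\<rceil>"

lemma lev_iff:
  assumes D: "2 \<le> D" and p: "0 < p"
  shows "1 \<le> p * real D ^ m \<longleftrightarrow> Lv D p \<le> m"
proof -
  have D1: "1 < real D" using D by simp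
  have pos: "0 < p * real D ^ m" using p D by simp
  have "1 \<le> p * real D ^ m \<longleftrightarrow> 0 \<le> log (real D) (p * real D ^ m)"
    using D1 pos by simp
  also have "log (real D) (p * real D ^ m) = log (real D) p + real m"
    using D1 p by (simp add: log_mult log_nat_power)
  also have "0 \<le> log (real D) p + real m \<longleftrightarrow> - log (real D) p \<le> real m" by linarith
  also have "\<dots> \<longleftrightarrow> \<lceil>- log (real D) p\<rceil> \<le> int m" by (simp add: ceiling_le_iff)
  also have "\<dots> \<longleftrightarrow> Lv D p \<le> m" unfolding Lv_def by linarith
  finally show ?thesis .
qed

lemma lev_floor_iff:
  assumes D: "2 \<le> D" and p: "0 < p"
  shows "1 \<le> nat \<lfloor>p * real D ^ m\<rfloor> \<longleftrightarrow> Lv D p \<le> m"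
proof -
  have "1 \<le> nat \<lfloor>p * real D ^ m\<rfloor> \<longleftrightarrow> 1 \<le> p * real D ^ m" by linarith
  then show ?thesis using lev_iff[OF D p] by simp
qed

lemma wt_Lv: assumes D: "2 \<le> D" and p: "0 < p" shows "wt D (Lv D p) \<le> p"
proof -
  have "1 \<le> p * real D ^ Lv D p" using lev_iff[OF D p] by simp
  then show ?thesis using D unfolding wt_def by (simp add: field_simps)
qed

lemma Lv_bound: assumes "real K + log (real D) p > 0" shows "real (Lv D p) < real K + 1"
proof -
  have "real_of_int \<lceil>- log (real D) p\<rceil> < - log (real D) p + 1" by linarith
  then show ?thesis using assms unfolding Lv_def by linarith
qed





lemma str_code_inj: "inj (str_code :: 'a::countable list \<Rightarrow> nat)"
proof (rule injI)
  fix x y :: "'a list" assume "str_code x = str_code y"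
  then have "map sym_code x = map sym_code y" unfolding str_code_def by (simp add: list_encode_eq)
  then show "x = y" by (metis inj_map_eq_map sym_code_inj)
qed

lemma lenc_str_code[simp]: "lenc (str_code x) = length x"
  unfolding str_code_def by simp

locale bsetup =
  fixes D :: nat and P :: "(nat \<Rightarrow> 'a::countable) measure" and f :: "nat \<Rightarrow> nat option"
    and c :: "nat \<Rightarrow> nat list"
  assumes D: "2 \<le> D" and Pp: "prob_space P" and sP: "sets P = sets seqspace"
    and fc: "computable1 f"
    and fv: "\<forall>x m. f (prod_encode (str_code (x::'a list), m)) = Some (nat \<lfloor>measure P (cyl x) * real D ^ m\<rfloor>)"
    and cnc: "computable_nat_code D c"
begin

definition val :: "nat \<Rightarrow> bool" where "val i = validc TYPE('a) i"
definition san :: "nat \<Rightarrow> nat" where "san i = (if val i then i else 0)"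
definition Fv :: "nat \<Rightarrow> nat \<Rightarrow> nat" where "Fv i m = the (f (prod_encode (san i, m)))"
definition PP :: "'a list \<Rightarrow> real" where "PP x = measure P (cyl x)"
definition L :: "'a list \<Rightarrow> nat" where "L x = Lv D (PP x)"
definition sx :: "'a list \<Rightarrow> nat" where "sx x = prod_encode (str_code x, L x)"
definition isreq :: "nat \<Rightarrow> nat \<Rightarrow> bool" where
  "isreq n s \<longleftrightarrow> val (fst (prod_decode s)) \<and> lenc (fst (prod_decode s)) = n \<and>
     1 \<le> Fv (fst (prod_decode s)) (snd (prod_decode s)) \<and>
     (snd (prod_decode s) = 0 \<or> Fv (fst (prod_decode s)) (snd (prod_decode s) - 1) = 0)"
definition lev :: "nat \<Rightarrow> nat" where "lev s = snd (prod_decode s)"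

lemma PP_nonneg: "0 \<le> PP x" unfolding PP_def by simp

lemma san_str: "\<exists>x::'a list. str_code x = san i"
proof (cases "val i")
  case True then show ?thesis unfolding san_def val_def using validc_iff by auto
next
  case False then show ?thesis unfolding san_def by (intro exI[of _ "[]"]) (simp add: str_code_def)
qed

lemma T_Fv: "T 2 (\<lambda>xs. Fv (xs ! 0) (xs ! 1))"
proof -
  have fP: "partrec 1 (\<lambda>xs. f (hd xs))" using fc unfolding computable1_def .
  have Tsan: "T 2 (\<lambda>xs. prod_encode (san (xs ! 0), xs ! 1))"
    unfolding san_def val_def
    by (rule T_pe; (rule T_if)?; (rule TP_validc)?; (rule T_proj', simp)?; rule T_const T_proj'; simp)
  show ?thesis unfolding Fv_def
  proof (rule P_oracle[OF fP Tsan])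
    fix xs :: "nat list"
    obtain x :: "'a list" where "str_code x = san (xs ! 0)" using san_str by blast
    then show "f (prod_encode (san (xs ! 0), xs ! 1)) \<noteq> None" using fv by (metis option.distinct(1))
  qed
qed

lemma Fv_str: "Fv (str_code x) m = nat \<lfloor>PP x * real D ^ m\<rfloor>"
proof -
  have "val (str_code x)" unfolding val_def using validc_iff by blast
  then show ?thesis unfolding Fv_def san_def PP_def using fv by simp
qed

lemma Fv_iff: "1 \<le> Fv (str_code x) m \<longleftrightarrow> 0 < PP x \<and> L x \<le> m"
proof (cases "0 < PP x")
  case True then show ?thesis unfolding Fv_str L_def using lev_floor_iff[OF D True] by simp
next
  case False then have "PP x = 0" using PP_nonneg[of x] by simp
  then show ?thesis unfolding Fv_str by simp
qed

lemma Fv_iff': "Suc 0 \<le> Fv (str_code x) m \<longleftrightarrow> 0 < PP x \<and> L x \<le> m"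
  using Fv_iff by simp

lemma isreq_iff: "isreq n s \<longleftrightarrow> (\<exists>x. s = sx x \<and> length x = n \<and> 0 < PP x)"
proof
  assume r: "isreq n s"
  define i where "i = fst (prod_decode s)"
  define m where "m = snd (prod_decode s)"
  have s: "s = prod_encode (i, m)" unfolding i_def m_def by simp
  have "val i" using r unfolding isreq_def i_def by simp
  then obtain x :: "'a list" where x: "str_code x = i" unfolding val_def using validc_iff by blast
  have "lenc i = n" using r unfolding isreq_def i_def by simp
  then have len: "length x = n" using x by auto
  have "1 \<le> Fv i m" using r unfolding isreq_def i_def m_def by simp
  then have p: "0 < PP x" and Lm: "L x \<le> m" using Fv_iff x by auto
  have "m \<le> L x"
  proof (cases "m = 0")
    case False
    then have "Fv i (m - 1) = 0" using r unfolding isreq_def i_def m_def by simp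
    then have "\<not> L x \<le> m - 1" using Fv_iff[of x "m - 1"] x p by simp
    then show ?thesis by simp
  qed simp
  then have "s = sx x" using Lm s x unfolding sx_def by simp
  then show "\<exists>x. s = sx x \<and> length x = n \<and> 0 < PP x" using len p by blast
next
  assume "\<exists>x. s = sx x \<and> length x = n \<and> 0 < PP x"
  then obtain x where s: "s = sx x" and len: "length x = n" and p: "0 < PP x" by blast
  have pd: "prod_decode s = (str_code x, L x)" unfolding s sx_def by simp
  have v: "val (str_code x)" unfolding val_def using validc_iff by blast
  have "L x = 0 \<or> Fv (str_code x) (L x - 1) = 0"
  proof (cases "L x = 0")
    case False
    then have "\<not> L x \<le> L x - 1" by simp
    then have "\<not> 1 \<le> Fv (str_code x) (L x - 1)" using Fv_iff[of x "L x - 1"] by simp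
    then show ?thesis by simp
  qed simp
  then show "isreq n s" unfolding isreq_def pd using v len p Fv_iff[of x "L x"] by simp
qed

lemma lev_sx[simp]: "lev (sx x) = L x" unfolding lev_def sx_def by simp

lemma sx_inj: "inj sx"
  unfolding sx_def using str_code_inj by (auto simp: inj_on_def)

lemma kraft: "\<forall>s. (\<Sum>t\<in>{t. t \<le> s \<and> isreq n t}. wt D (lev t)) \<le> 1"
proof
  fix s
  define X where "X = {x. length x = n \<and> 0 < PP x \<and> sx x \<le> s}"
  have eq: "{t. t \<le> s \<and> isreq n t} = sx ` X" unfolding X_def isreq_iff by auto
  have finX: "finite X"
  proof (rule finite_imageD)
    show "finite (sx ` X)" unfolding eq[symmetric] by simp
    show "inj_on sx X" using sx_inj by (simp add: inj_on_def inj_def)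
  qed
  have "(\<Sum>t\<in>{t. t \<le> s \<and> isreq n t}. wt D (lev t)) = (\<Sum>x\<in>X. wt D (L x))"
    unfolding eq using sx_inj by (simp add: sum.reindex inj_on_def inj_def)
  also have "\<dots> \<le> (\<Sum>x\<in>X. PP x)"
    by (intro sum_mono) (auto simp: X_def L_def intro: wt_Lv[OF D])
  also have "\<dots> \<le> 1" unfolding PP_def using sum_cyl_le1[OF Pp sP finX] unfolding X_def by auto
  finally show "(\<Sum>t\<in>{t. t \<le> s \<and> isreq n t}. wt D (lev t)) \<le> 1" .
qed



definition Cp :: "'a list \<Rightarrow> nat list option" where
  "Cp x = (if 0 < PP x then Some (digs D (L x) (allocv D (runS D (isreq (length x)) lev (sx x)) (L x))) else None)"

lemma allocS_sx: "allocS D (isreq (length x)) lev (sx x) = (L x, allocv D (runS D (isreq (length x)) lev (sx x)) (L x))"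
  by (simp add: allocS_def)

lemma SF: "shannon_fano_code D P Cp"
  unfolding shannon_fano_code_def
proof (intro conjI allI impI)
  fix x show "Cp x \<noteq> None \<longleftrightarrow> 0 < measure P (cyl x)" unfolding Cp_def PP_def by simp
next
  fix x w assume cw: "Cp x = Some w"
  have D0: "0 < D" using D by simp
  from cw have w: "w = digs D (L x) (allocv D (runS D (isreq (length x)) lev (sx x)) (L x))"
    by (auto simp: Cp_def split: if_splits)
  show "set w \<subseteq> {..<D}"
    using digs_set[OF D0, of "L x"] w by simp
  show "length w = nat \<lceil>- log (real D) (measure P (cyl x))\<rceil>"
    using w by (simp add: L_def Lv_def PP_def)
next
  fix x y u v assume len: "length x = length y" and ne: "x \<noteq> y" and u: "Cp x = Some u" and v: "Cp y = Some v"
  define n where "n = length x"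
  have px: "0 < PP x" and py: "0 < PP y" using u v unfolding Cp_def by (auto split: if_splits)
  have rx: "isreq n (sx x)" and ry: "isreq n (sx y)" unfolding isreq_iff using px py len n_def by auto
  have sne: "sx x \<noteq> sx y" using ne sx_inj by (auto simp: inj_def)
  have dj: "disj D (allocS D (isreq n) lev (sx x)) (allocS D (isreq n) lev (sx y))"
    by (rule run_disj[OF D kraft rx ry sne])
  have vx: "snd (allocS D (isreq n) lev (sx x)) < D ^ fst (allocS D (isreq n) lev (sx x))"
    by (rule run_valid[OF D kraft rx])
  have vy: "snd (allocS D (isreq n) lev (sx y)) < D ^ fst (allocS D (isreq n) lev (sx y))"
    by (rule run_valid[OF D kraft ry])
  have "\<not> prefix (digs D (fst (allocS D (isreq n) lev (sx x))) (snd (allocS D (isreq n) lev (sx x))))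
                  (digs D (fst (allocS D (isreq n) lev (sx y))) (snd (allocS D (isreq n) lev (sx y))))"
    using disj_not_prefix[OF _ vx vy dj] D by simp
  moreover have "u = digs D (fst (allocS D (isreq n) lev (sx x))) (snd (allocS D (isreq n) lev (sx x)))"
    using u px unfolding Cp_def n_def allocS_sx by simp
  moreover have "v = digs D (fst (allocS D (isreq n) lev (sx y))) (snd (allocS D (isreq n) lev (sx y)))"
  proof -
    have n_y: "n = length y" using len n_def by simp
    show ?thesis using v py unfolding Cp_def n_y allocS_sx by simp
  qed
  ultimately show "\<not> prefix u v" by simp
qed

lemma SF_noprefix: "length x = length y \<Longrightarrow> x \<noteq> y \<Longrightarrow> Cp x = Some u \<Longrightarrow> Cp y = Some v \<Longrightarrow> \<not> prefix u v"
  using SF unfolding shannon_fano_code_def by blast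

lemma c_prefix: "nat_prefix_code D c" using cnc unfolding computable_nat_code_def by simp

lemma bayes_prefix: "prefix_code D (bayes_code c Cp)"
  unfolding prefix_code_def
proof (intro conjI allI impI)
  fix x w assume "bayes_code c Cp x = Some w"
  then obtain u where w: "w = c (length x) @ u" and u: "Cp x = Some u" unfolding bayes_code_def by auto
  have "set (c (length x)) \<subseteq> {..<D}" using c_prefix unfolding nat_prefix_code_def by simp
  moreover have "set u \<subseteq> {..<D}" using u SF unfolding shannon_fano_code_def by blast
  ultimately show "set w \<subseteq> {..<D}" using w by simp
next
  fix x y w v assume bx: "bayes_code c Cp x = Some w" and by': "bayes_code c Cp y = Some v" and p: "prefix w v"
  obtain u1 where w: "w = c (length x) @ u1" and u1: "Cp x = Some u1" using bx unfolding bayes_code_def by auto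
  obtain v1 where v: "v = c (length y) @ v1" and v1: "Cp y = Some v1" using by' unfolding bayes_code_def by auto
  have "prefix (c (length x)) v" using p w by (metis append_prefixD)
  moreover have "prefix (c (length y)) v" using v by simp
  ultimately have "prefix (c (length x)) (c (length y)) \<or> prefix (c (length y)) (c (length x))"
    by (rule prefix_same_cases)
  then have len: "length x = length y" using c_prefix unfolding nat_prefix_code_def by metis
  then have "prefix u1 v1" using p w v by simp
  then show "x = y" using SF_noprefix[OF len _ u1 v1] by blast
qed

lemma bayes_inj: "bayes_code c Cp x = Some w \<Longrightarrow> bayes_code c Cp y = Some w \<Longrightarrow> x = y"
  using bayes_prefix unfolding prefix_code_def by blast



lemma TP_isreq: "TP 2 (\<lambda>xs. isreq (xs ! 0) (xs ! 1))"
proof -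
  have F: "T n a \<Longrightarrow> T n b \<Longrightarrow> T n (\<lambda>xs. Fv (a xs) (b xs))" for n a b by (rule T_lift2[OF T_Fv])
  show ?thesis unfolding isreq_def val_def
    apply (rule TP_and, rule TP_validc, rule T_fst_pd, rule T_proj', simp)
    apply (rule TP_and, rule TP_eq, rule T_lenc, rule T_fst_pd, rule T_proj', simp, rule T_proj', simp)
    apply (rule TP_and, rule TP_le, rule T_const, rule F, rule T_fst_pd, rule T_proj', simp, rule T_snd_pd, rule T_proj', simp)
    apply (rule TP_or, rule TP_eq, rule T_snd_pd, rule T_proj', simp, rule T_const)
    apply (rule TP_eq, rule F, rule T_fst_pd, rule T_proj', simp, rule T_sub, rule T_snd_pd, rule T_proj', simp, rule T_const, rule T_const)
    done
qed

lemma T_lev: "T 1 (\<lambda>xs. lev (xs ! 0))"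
  unfolding lev_def by (rule T_snd_pd, rule T_proj') simp

lemma T_run[intro]: "T n a \<Longrightarrow> T n b \<Longrightarrow> T n (\<lambda>xs. runS D (isreq (a xs)) lev (b xs))"
  by (rule T_lift2[OF T_runS[OF TP_isreq T_lev]])

definition H :: "nat \<Rightarrow> nat \<Rightarrow> nat" where
  "H i m = appc (list_encode (c (lenc i))) (digc D m (allocv D (runS D (isreq (lenc i)) lev (prod_encode (i, m))) m))"

lemma T_c: "T n a \<Longrightarrow> T n (\<lambda>xs. list_encode (c (a xs)))"
proof -
  have "computable1 (\<lambda>k. Some (list_encode (c k)))" using cnc unfolding computable_nat_code_def by simp
  then have "T 1 (\<lambda>xs. list_encode (c (xs ! 0)))" by (rule T_computable1)
  then show "T n a \<Longrightarrow> T n (\<lambda>xs. list_encode (c (a xs)))" by (rule T_lift1)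
qed

lemma T_H: "T n a \<Longrightarrow> T n b \<Longrightarrow> T n (\<lambda>xs. H (a xs) (b xs))"
proof -
  have "T 2 (\<lambda>xs. H (xs ! 0) (xs ! 1))"
    unfolding H_def
    apply (rule T_appc, rule T_c, rule T_lenc, rule T_proj', simp)
    apply (rule T_digc, rule T_const, rule T_proj', simp)
    apply (rule T_allocv, rule T_run, rule T_lenc, rule T_proj', simp, rule T_pe, (rule T_proj', simp)+)
    done
  then show "T n a \<Longrightarrow> T n b \<Longrightarrow> T n (\<lambda>xs. H (a xs) (b xs))" by (rule T_lift2)
qed

lemma H_sx: assumes "0 < PP x"
  shows "bayes_code c Cp x = Some (c (length x) @ digs D (L x) (allocv D (runS D (isreq (length x)) lev (sx x)) (L x)))"
    and "H (str_code x) (L x) = list_encode (c (length x) @ digs D (L x) (allocv D (runS D (isreq (length x)) lev (sx x)) (L x)))"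
  using assms unfolding bayes_code_def Cp_def H_def sx_def by (simp_all add: digc_le)

definition fo :: "nat \<Rightarrow> nat option" where
  "fo i = (if \<exists>m. 1 \<le> Fv i m then Some (H i (LEAST m. 1 \<le> Fv i m)) else None)"

lemma fo_comp: "computable1 fo"
proof -
  have p: "T (Suc 1) (\<lambda>ys. if 1 \<le> Fv (ys ! 1) (ys ! 0) then 0 else 1)"
    by (rule T_if, rule TP_le, rule T_const, rule T_lift2[OF T_Fv], (rule T_proj', simp)+, rule T_const, rule T_const)
  note q = P_mu[OF p]
  have h: "T (Suc 1) (\<lambda>ys. H (ys ! 1) (ys ! 0))" by (rule T_H; rule T_proj'; simp)
  note r = P_comp[OF h q]
  show ?thesis
  proof (rule computable1_P[OF r])
    fix i
    have "(\<exists>y. (if 1 \<le> Fv i y then 0 else 1::nat) = 0) \<longleftrightarrow> (\<exists>m. 1 \<le> Fv i m)" by auto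
    moreover have "(LEAST y. (if 1 \<le> Fv i y then 0 else 1::nat) = 0) = (LEAST m. 1 \<le> Fv i m)"
      by (rule arg_cong[where f=Least]) (auto intro!: ext)
    ultimately show "(case (if \<exists>y. (if 1 \<le> Fv ((y # [i]) ! 1) ((y # [i]) ! 0) then 0 else 1::nat) = 0
             then Some (LEAST y. (if 1 \<le> Fv ((y # [i]) ! 1) ((y # [i]) ! 0) then 0 else 1::nat) = 0) else None) of
          None \<Rightarrow> None | Some v \<Rightarrow> Some (H ((v # [i]) ! 1) ((v # [i]) ! 0))) = fo i"
      unfolding fo_def by simp
  qed
qed

lemma fo_correct: "fo (str_code x) = map_option list_encode (bayes_code c Cp x)"
proof (cases "0 < PP x")
  case True
  have ex: "\<exists>m. 1 \<le> Fv (str_code x) m" using Fv_iff[of x "L x"] True by auto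
  have "(LEAST m. 1 \<le> Fv (str_code x) m) = L x"
    by (rule Least_equality) (auto simp: Fv_iff' True)
  then show ?thesis using ex H_sx[OF True] unfolding fo_def by simp
next
  case False
  then have "\<not> (\<exists>m. 1 \<le> Fv (str_code x) m)" using Fv_iff by auto
  moreover have "bayes_code c Cp x = None" using False unfolding bayes_code_def Cp_def by simp
  ultimately show ?thesis unfolding fo_def by simp
qed

definition tst :: "nat \<Rightarrow> nat \<Rightarrow> bool" where
  "tst s W \<longleftrightarrow> isreq (lenc (fst (prod_decode s))) s \<and> H (fst (prod_decode s)) (snd (prod_decode s)) = W"

lemma tst_iff: "tst s (list_encode w) \<longleftrightarrow> (\<exists>x. s = sx x \<and> bayes_code c Cp x = Some w)"
proof
  assume t: "tst s (list_encode w)"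
  then obtain x where s: "s = sx x" and len: "length x = lenc (fst (prod_decode s))" and p: "0 < PP x"
    unfolding tst_def isreq_iff by blast
  have pd: "prod_decode s = (str_code x, L x)" unfolding s sx_def by simp
  have "H (str_code x) (L x) = list_encode w" using t unfolding tst_def pd by simp
  then have "bayes_code c Cp x = Some w" using H_sx[OF p] by (simp add: list_encode_eq)
  then show "\<exists>x. s = sx x \<and> bayes_code c Cp x = Some w" using s by blast
next
  assume "\<exists>x. s = sx x \<and> bayes_code c Cp x = Some w"
  then obtain x where s: "s = sx x" and b: "bayes_code c Cp x = Some w" by blast
  have p: "0 < PP x" using b unfolding bayes_code_def Cp_def by (auto split: if_splits)
  have pd: "prod_decode s = (str_code x, L x)" unfolding s sx_def by simp
  have r: "isreq (length x) s" unfolding isreq_iff s using p by blast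
  show "tst s (list_encode w)" unfolding tst_def pd using r H_sx[OF p] b by simp
qed

definition gi :: "nat \<Rightarrow> nat option" where
  "gi W = (if \<exists>s. tst s W then Some (fst (prod_decode (LEAST s. tst s W))) else None)"

lemma gi_comp: "computable1 gi"
proof -
  have tP: "TP 2 (\<lambda>xs. tst (xs ! 0) (xs ! 1))"
    unfolding tst_def
    apply (rule TP_and, rule TP_lift2[OF TP_isreq], rule T_lenc, rule T_fst_pd, rule T_proj', simp, rule T_proj', simp)
    apply (rule TP_eq, rule T_H, rule T_fst_pd, rule T_proj', simp, rule T_snd_pd, rule T_proj', simp, rule T_proj', simp)
    done
  have p: "T (Suc 1) (\<lambda>ys. if tst (ys ! 0) (ys ! 1) then 0 else 1)"
    by (rule T_if[OF _ T_const T_const]) (use tP in \<open>simp add: numeral_2_eq_2\<close>)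
  note q = P_mu[OF p]
  have h: "T (Suc 1) (\<lambda>ys. fst (prod_decode (ys ! 0)))" by (rule T_fst_pd, rule T_proj') simp
  note r = P_comp[OF h q]
  show ?thesis
  proof (rule computable1_P[OF r])
    fix i
    have "(\<exists>y. (if tst y i then 0 else 1::nat) = 0) \<longleftrightarrow> (\<exists>s. tst s i)" by auto
    moreover have "(LEAST y. (if tst y i then 0 else 1::nat) = 0) = (LEAST s. tst s i)"
      by (rule arg_cong[where f=Least]) (auto intro!: ext)
    ultimately show "(case (if \<exists>y. (if tst ((y # [i]) ! 0) ((y # [i]) ! 1) then 0 else 1::nat) = 0
             then Some (LEAST y. (if tst ((y # [i]) ! 0) ((y # [i]) ! 1) then 0 else 1::nat) = 0) else None) of
          None \<Rightarrow> None | Some v \<Rightarrow> Some (fst (prod_decode ((v # [i]) ! 0)))) = gi i"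
      unfolding gi_def by simp
  qed
qed

lemma gi_correct: "gi (list_encode w) = (if \<exists>x. bayes_code c Cp x = Some w
     then Some (str_code (THE x. bayes_code c Cp x = Some w)) else None)"
proof (cases "\<exists>x. bayes_code c Cp x = Some w")
  case True
  then have ex: "\<exists>s. tst s (list_encode w)" unfolding tst_iff by blast
  define s where "s = (LEAST s. tst s (list_encode w))"
  have "tst s (list_encode w)" unfolding s_def using ex by (rule LeastI_ex)
  then obtain x where sx: "s = sx x" and b: "bayes_code c Cp x = Some w" unfolding tst_iff by blast
  have the: "(THE x. bayes_code c Cp x = Some w) = x"
    using b bayes_inj by blast
  show ?thesis unfolding gi_def using ex True the sx s_def by (simp add: sx_def)
next
  case False
  then have "\<not> (\<exists>s. tst s (list_encode w))" unfolding tst_iff by blast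
  then show ?thesis unfolding gi_def using False by simp
qed

lemma bayes_computable: "computable_code D (bayes_code c Cp)"
  unfolding computable_code_def
  using fo_comp fo_correct gi_comp gi_correct by blast

lemma main_ineq:
  assumes "\<omega> \<in> barron_random D U P"
  shows "\<forall>\<^sub>F n in sequentially. \<exists>w. bayes_code c Cp (pref \<omega> n) = Some w \<and>
      real (length w) - real (KC U (pref \<omega> n)) < real (length (c n)) + 1"
proof -
  have ev: "\<forall>\<^sub>F n in sequentially. measure P (cyl (pref \<omega> n)) > 0 \<and>
      real (KC U (pref \<omega> n)) + log (real D) (measure P (cyl (pref \<omega> n))) > 0"
    using assms unfolding barron_random_def by simp
  show ?thesis
  proof (rule eventually_mono[OF ev])
    fix n assume h: "measure P (cyl (pref \<omega> n)) > 0 \<and>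
      real (KC U (pref \<omega> n)) + log (real D) (measure P (cyl (pref \<omega> n))) > 0"
    define x where "x = pref \<omega> n"
    have lx: "length x = n" unfolding x_def pref_def by simp
    have p: "0 < PP x" using h unfolding PP_def x_def by simp
    have Lb: "real (L x) < real (KC U x) + 1"
      unfolding L_def using Lv_bound h unfolding PP_def x_def by blast
    show "\<exists>w. bayes_code c Cp (pref \<omega> n) = Some w \<and>
      real (length w) - real (KC U (pref \<omega> n)) < real (length (c n)) + 1"
      using H_sx(1)[OF p] Lb lx unfolding x_def[symmetric] by simp
  qed
qed

end


theorem corollary1:
  fixes D :: nat
    and \<pi> :: "'b measure"
    and P\<theta> :: "'b \<Rightarrow> (nat \<Rightarrow> 'a::countable) measure"
    and P :: "(nat \<Rightarrow> 'a) measure"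
    and c :: "nat \<Rightarrow> nat list"
    and U :: "nat list \<Rightarrow> 'a list option"
  assumes "D \<ge> 2"
    and "universal_prefix_machine D U"
    and "prob_space \<pi>"
    and "P\<theta> \<in> \<pi> \<rightarrow>\<^sub>M prob_algebra seqspace"
    and "sets P = sets seqspace"
    and "prob_space P"
    and "\<forall>x. measure P (cyl x) = (\<integral>\<theta>. measure (P\<theta> \<theta>) (cyl x) \<partial>\<pi>)"
    and "computable_measure D P"
    and "computable_nat_code D c"
  shows "\<exists>C'. shannon_fano_code D P C' \<and>
           prefix_code D (bayes_code c C') \<and> computable_code D (bayes_code c C') \<and>
           (\<forall>\<omega>\<in>barron_random D U P. \<forall>\<^sub>F n in sequentially.
              \<exists>w. bayes_code c C' (pref \<omega> n) = Some w \<and>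
                  real (length w) - real (KC U (pref \<omega> n)) < real (length (c n)) + 1)"
proof -
  obtain f where fc: "computable1 f"
    and fv: "\<forall>x m. f (prod_encode (str_code (x::'a list), m)) = Some (nat \<lfloor>measure P (cyl x) * real D ^ m\<rfloor>)"
    using assms(8) unfolding computable_measure_def by blast
  interpret bsetup D P f c
    using assms(1) assms(6) assms(5) fc fv assms(9) by (rule bsetup.intro)
  have "shannon_fano_code D P Cp" by (rule SF)
  moreover have "prefix_code D (bayes_code c Cp)" by (rule bayes_prefix)
  moreover have "computable_code D (bayes_code c Cp)" by (rule bayes_computable)
  moreover have "\<forall>\<omega>\<in>barron_random D U P. \<forall>\<^sub>F n in sequentially.
              \<exists>w. bayes_code c Cp (pref \<omega> n) = Some w \<and>
                  real (length w) - real (KC U (pref \<omega> n)) < real (length (c n)) + 1"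
    using main_ineq by blast
  ultimately show ?thesis by blast
qed



end
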